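(* Let $\Gamma$ be a profinite group and let $n\geq 2$ be even. Let $(Z/Z_0,\partial_Z)$ be an oriented $\Gamma$-covering of degree $2$ with $|Z_0|=n$, and for $i=1,2$ put $C_i(Z/Z_0,\partial_Z)=\{\omega\in C(Z/Z_0)\mid \delta(\omega)=\partial_Z(i)\}$. Then $C(Z/Z_0)=C_1(Z/Z_0,\partial_Z)\sqcup C_2(Z/Z_0,\partial_Z)$, each $C_i(Z/Z_0,\partial_Z)$ is a $\Gamma$-stable subset stable under the complementation map $\omega\mapsto Z\setminus\omega$, which is a fixed-point-free involution on it, so that $C_i(Z/Z_0,\partial_Z)$ is a $\Gamma$-covering of degree $2$ of a $\Gamma$-set with $2^{n-2}$ elements (its set of orbits under complementation); these assignments are functorial with respect to isomorphisms of oriented coverings, giving two functors $C_1,C_2$ from the groupoid of oriented degree-$2$ coverings of $n$-element $\Gamma$-sets to the groupoid of degree-$2$ coverings of $2^{n-2}$-element $\Gamma$-sets. Moreover, two sections $\omega,\omega'\in C(Z/Z_0)$ lie in the same set $C_1(Z/Z_0,\partial_Z)$ or $C_2(Z/Z_0,\partial_Z)$ if and only if $|\omega\cap\omega'|\equiv 0\pmod 2$.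
   Context: A (finite) $\Gamma$-set is a finite set with a continuous left action of $\Gamma$. A $\Gamma$-covering of degree $2$ is a $\Gamma$-equivariant map $\pi\colon Z\to Z_0$ of $\Gamma$-sets all of whose fibers have $2$ elements; $\sigma$ denotes the involution of $Z$ swapping the elements of each fiber. $C(Z/Z_0)$ is the $\Gamma$-set of all subsets $\{z_1,\dots,z_n\}\subset Z$ mapping bijectively onto $Z_0$. For a $\Gamma$-set $X$ with $m\ge 2$ elements, $\Delta(X)$ is the two-element $\Gamma$-set of $\mathfrak A_m$-orbits of orderings $(x_1,\dots,x_m)$ of $X$. The map $\delta\colon C(Z/Z_0)\to\Delta(Z)$ sends $\{z_1,\dots,z_n\}$ to the $\mathfrak A_{2n}$-orbit of $(z_1,\dots,z_n,\sigma(z_1),\dots,\sigma(z_n))$. An orientation of $Z$ is an isomorphism of $\Gamma$-sets $\partial_Z\colon\{1,2\}\to\Delta(Z)$, where $\{1,2\}$ has trivial $\Gamma$-action (so $\Gamma$ must act trivially on $\Delta(Z)$); an oriented covering is a pair $(Z/Z_0,\partial_Z)$, and morphisms of oriented coverings are isomorphisms of coverings $f$ compatible with the orientations (i.e. the induced map $\Delta(f)$ carries one orientation to the other). *)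

theory Defs
  imports "HOL-Analysis.Analysis" "HOL-Algebra.Group_Action" "HOL-Combinatorics.Permutations"
begin

definition profinite_group :: "('g, 'm) monoid_scheme \<Rightarrow> 'g topology \<Rightarrow> bool" where
  "profinite_group G T \<longleftrightarrow>
     group G \<and> topspace T = carrier G \<and>
     compact_space T \<and> Hausdorff_space T \<and>
     (\<forall>x \<in> topspace T. connected_component_of_set T x = {x}) \<and>
     continuous_map (prod_topology T T) T (\<lambda>(x, y). x \<otimes>\<^bsub>G\<^esub> y) \<and>
     continuous_map T T (\<lambda>x. inv\<^bsub>G\<^esub> x)"

definition gamma_set :: "('g, 'm) monoid_scheme \<Rightarrow> 'g topology \<Rightarrow> 'x set \<Rightarrow> ('g \<Rightarrow> 'x \<Rightarrow> 'x) \<Rightarrow> bool" where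
  "gamma_set G T X act \<longleftrightarrow>
     finite X \<and> group_action G X act \<and>
     continuous_map (prod_topology T (discrete_topology X)) (discrete_topology X)
        (\<lambda>(g, x). act g x)"

definition covering2 ::
  "('g, 'm) monoid_scheme \<Rightarrow> 'g topology \<Rightarrow> 'z set \<Rightarrow> 'y set \<Rightarrow>
   ('g \<Rightarrow> 'z \<Rightarrow> 'z) \<Rightarrow> ('g \<Rightarrow> 'y \<Rightarrow> 'y) \<Rightarrow> ('z \<Rightarrow> 'y) \<Rightarrow> bool" where
  "covering2 G T Z Z0 act act0 \<pi> \<longleftrightarrow>
     gamma_set G T Z act \<and> gamma_set G T Z0 act0 \<and>
     (\<forall>z \<in> Z. \<pi> z \<in> Z0) \<and>
     (\<forall>g \<in> carrier G. \<forall>z \<in> Z. \<pi> (act g z) = act0 g (\<pi> z)) \<and>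
     (\<forall>y \<in> Z0. card {z \<in> Z. \<pi> z = y} = 2)"

definition covering_iso ::
  "('g, 'm) monoid_scheme \<Rightarrow>
   'z set \<Rightarrow> 'y set \<Rightarrow> ('g \<Rightarrow> 'z \<Rightarrow> 'z) \<Rightarrow> ('g \<Rightarrow> 'y \<Rightarrow> 'y) \<Rightarrow> ('z \<Rightarrow> 'y) \<Rightarrow>
   'w set \<Rightarrow> 'v set \<Rightarrow> ('g \<Rightarrow> 'w \<Rightarrow> 'w) \<Rightarrow> ('g \<Rightarrow> 'v \<Rightarrow> 'v) \<Rightarrow> ('w \<Rightarrow> 'v) \<Rightarrow>
   ('z \<Rightarrow> 'w) \<Rightarrow> ('y \<Rightarrow> 'v) \<Rightarrow> bool" where
  "covering_iso G Z Z0 act act0 \<pi> Z' Z0' act' act0' \<pi>' f f0 \<longleftrightarrow>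
     bij_betw f Z Z' \<and> bij_betw f0 Z0 Z0' \<and>
     (\<forall>g \<in> carrier G. \<forall>z \<in> Z. f (act g z) = act' g (f z)) \<and>
     (\<forall>g \<in> carrier G. \<forall>y \<in> Z0. f0 (act0 g y) = act0' g (f0 y)) \<and>
     (\<forall>z \<in> Z. \<pi>' (f z) = f0 (\<pi> z))"

definition sheet_swap :: "'z set \<Rightarrow> ('z \<Rightarrow> 'y) \<Rightarrow> 'z \<Rightarrow> 'z" where
  "sheet_swap Z \<pi> z = (THE z'. z' \<in> Z \<and> \<pi> z' = \<pi> z \<and> z' \<noteq> z)"

definition sections :: "'z set \<Rightarrow> 'y set \<Rightarrow> ('z \<Rightarrow> 'y) \<Rightarrow> 'z set set" where
  "sections Z Z0 \<pi> = {S. S \<subseteq> Z \<and> bij_betw \<pi> S Z0}"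

definition image_act :: "'s set set \<Rightarrow> ('g \<Rightarrow> 's \<Rightarrow> 's) \<Rightarrow> 'g \<Rightarrow> 's set \<Rightarrow> 's set" where
  "image_act C act g = (\<lambda>S \<in> C. act g ` S)"

definition orderings :: "'x set \<Rightarrow> 'x list set" where
  "orderings X = {xs. distinct xs \<and> set xs = X}"

definition alt_related :: "'x list \<Rightarrow> 'x list \<Rightarrow> bool" where
  "alt_related xs ys \<longleftrightarrow>
     (\<exists>p. p permutes {..<length xs} \<and> evenperm p \<and>
          ys = map (\<lambda>i. xs ! p i) [0..<length xs])"

definition alt_orbit :: "'x list \<Rightarrow> 'x list set" where
  "alt_orbit xs = {ys. alt_related xs ys}"

definition Delta :: "'x set \<Rightarrow> 'x list set set" where
  "Delta X = alt_orbit ` orderings X"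

definition Delta_map :: "('x \<Rightarrow> 'w) \<Rightarrow> 'x list set \<Rightarrow> 'w list set" where
  "Delta_map f D = map f ` D"

definition Delta_act :: "'x set \<Rightarrow> ('g \<Rightarrow> 'x \<Rightarrow> 'x) \<Rightarrow> 'g \<Rightarrow> 'x list set \<Rightarrow> 'x list set" where
  "Delta_act X act g = (\<lambda>D \<in> Delta X. Delta_map (act g) D)"

text \<open>Orientation: Gamma-isomorphism from the trivial Gamma-set {1,2} to Delta(Z).\<close>
definition orientation ::
  "('g, 'm) monoid_scheme \<Rightarrow> 'z set \<Rightarrow> ('g \<Rightarrow> 'z \<Rightarrow> 'z) \<Rightarrow> (nat \<Rightarrow> 'z list set) \<Rightarrow> bool" where
  "orientation G Z act ori \<longleftrightarrow>
     bij_betw ori {1, 2} (Delta Z) \<and>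
     (\<forall>g \<in> carrier G. \<forall>i \<in> {1, 2}. Delta_act Z act g (ori i) = ori i)"

definition delta_map :: "'z set \<Rightarrow> ('z \<Rightarrow> 'y) \<Rightarrow> 'z set \<Rightarrow> 'z list set" where
  "delta_map Z \<pi> \<omega> =
     (let xs = (SOME xs. xs \<in> orderings \<omega>) in alt_orbit (xs @ map (sheet_swap Z \<pi>) xs))"

definition C_part :: "'z set \<Rightarrow> 'y set \<Rightarrow> ('z \<Rightarrow> 'y) \<Rightarrow> (nat \<Rightarrow> 'z list set) \<Rightarrow> nat \<Rightarrow> 'z set set" where
  "C_part Z Z0 \<pi> ori i = {\<omega> \<in> sections Z Z0 \<pi>. delta_map Z \<pi> \<omega> = ori i}"

definition compl_pair :: "'z set \<Rightarrow> 'z set \<Rightarrow> 'z set set" where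
  "compl_pair Z \<omega> = {\<omega>, Z - \<omega>}"

definition compl_quot :: "'z set \<Rightarrow> 'z set set \<Rightarrow> 'z set set set" where
  "compl_quot Z C = compl_pair Z ` C"

definition quot_act :: "'z set set set \<Rightarrow> ('g \<Rightarrow> 'z \<Rightarrow> 'z) \<Rightarrow> 'g \<Rightarrow> 'z set set \<Rightarrow> 'z set set" where
  "quot_act Q act g = (\<lambda>q \<in> Q. (\<lambda>\<omega>. act g ` \<omega>) ` q)"

end

theory Submission
  imports Defs
begin


lemma orderings_exist: "finite S \<Longrightarrow> \<exists>xs. xs \<in> orderings S"
  unfolding orderings_def using finite_distinct_list by auto

lemma nth_bij: "distinct l \<Longrightarrow> bij_betw ((!) l) {..<length l} (set l)"
  by (rule bij_betw_nth) auto

lemma alt_related_iff: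
  assumes "distinct l"
  shows "alt_related l ys \<longleftrightarrow> (\<exists>q. q permutes set l \<and> evenperm q \<and> ys = map q l)"
proof
  assume "alt_related l ys"
  then obtain p where p: "p permutes {..<length l}" "evenperm p" "ys = map (\<lambda>i. l ! p i) [0..<length l]"
    unfolding alt_related_def by blast
  define q where "q = map_permutation {..<length l} ((!) l) p"
  have b: "bij_betw ((!) l) {..<length l} (set l)" using nth_bij[OF assms] .
  have F1: "q permutes set l" unfolding q_def by (rule map_permutation_permutes[OF b p(1)])
  have F2: "evenperm q" unfolding q_def
    evenperm_map_permutation[OF bij_betw_imp_inj_on[OF b] p(1) finite_lessThan] by (rule p(2))
  have F3: "ys = map q l"
  proof -
    have "map q l = map (\<lambda>i. q (l ! i)) [0..<length l]"
      by (rule nth_equalityI) simp_all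
    also have "\<dots> = map (\<lambda>i. l ! p i) [0..<length l]"
      unfolding q_def by (intro map_cong refl map_permutation_apply[OF bij_betw_imp_inj_on[OF b]]) auto
    finally show ?thesis using p(3) by simp
  qed
  show "\<exists>q. q permutes set l \<and> evenperm q \<and> ys = map q l" by (intro exI[of _ q] conjI F1 F2 F3)
next
  assume "\<exists>q. q permutes set l \<and> evenperm q \<and> ys = map q l"
  then obtain q where q: "q permutes set l" "evenperm q" "ys = map q l" by blast
  have b: "bij_betw ((!) l) {..<length l} (set l)" using nth_bij[OF assms] .
  define g where "g = the_inv_into {..<length l} ((!) l)"
  have bg: "bij_betw g (set l) {..<length l}" unfolding g_def
    using b bij_betw_the_inv_into by blast
  have gi: "\<And>x. x \<in> set l \<Longrightarrow> l ! (g x) = x" unfolding g_def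
    using b by (metis bij_betw_def f_the_inv_into_f)
  define p where "p = map_permutation (set l) g q"
  have pp: "p permutes {..<length l}" unfolding p_def by (rule map_permutation_permutes[OF bg q(1)])
  have pe: "evenperm p" unfolding p_def
    evenperm_map_permutation[OF bij_betw_imp_inj_on[OF bg] q(1) finite_set] by (rule q(2))
  have bk: "map_permutation {..<length l} ((!) l) p = q" unfolding p_def
    by (rule map_permutation_compose_inv[OF bg q(1) gi])
  have "map (\<lambda>i. l ! p i) [0..<length l] = map (\<lambda>i. q (l ! i)) [0..<length l]"
  proof (intro map_cong refl)
    fix i assume "i \<in> set [0..<length l]"
    hence "i \<in> {..<length l}" by simp
    have "map_permutation {..<length l} ((!) l) p (l ! i) = l ! p i"
      by (rule map_permutation_apply[OF bij_betw_imp_inj_on[OF b]]) fact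
    thus "l ! p i = q (l ! i)" using bk by simp
  qed
  also have "\<dots> = map q l" by (rule nth_equalityI) simp_all
  finally have F4: "ys = map (\<lambda>i. l ! p i) [0..<length l]" using q(3) by simp
  show "alt_related l ys" unfolding alt_related_def by (intro exI[of _ p] conjI pp pe F4)
qed

lemma alt_orbit_eq:
  assumes "distinct l"
  shows "alt_orbit l = {map q l | q. q permutes set l \<and> evenperm q}"
  unfolding alt_orbit_def alt_related_iff[OF assms] by (rule Collect_cong) fast

lemma permutes_perm: "q permutes S \<Longrightarrow> finite S \<Longrightarrow> permutation q"
  using permutation_permutes by blast

lemma alt_orbit_map_iff:
  assumes "distinct l" "q permutes set l"
  shows "alt_orbit (map q l) = alt_orbit l \<longleftrightarrow> evenperm q"
proof -
  have sq: "set (map q l) = set l" using assms(2) by (simp add: permutes_image)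
  have dq: "distinct (map q l)" using assms
    by (simp add: distinct_map permutes_inj_on)
  have pq: "permutation q" using assms(2) permutes_perm by blast
  show ?thesis
  proof
    assume eq: "alt_orbit (map q l) = alt_orbit l"
    have "map q l \<in> alt_orbit (map q l)" unfolding alt_orbit_eq[OF dq]
      by (rule CollectI, rule exI[of _ id]) (auto simp: permutes_id)
    then obtain r where r: "r permutes set l" "evenperm r" "map q l = map r l"
      unfolding eq alt_orbit_eq[OF assms(1)] by blast
    have "q = r"
    proof
      fix x show "q x = r x"
        using r(3) permutes_not_in[OF assms(2)] permutes_not_in[OF r(1)]
        by (cases "x \<in> set l") (auto simp: map_eq_conv)
    qed
    thus "evenperm q" using r by simp
  next
    assume eq: "evenperm q"
    show "alt_orbit (map q l) = alt_orbit l"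
    proof
      show "alt_orbit (map q l) \<subseteq> alt_orbit l"
      proof
        fix ys assume "ys \<in> alt_orbit (map q l)"
        then obtain r where r: "r permutes set l" "evenperm r" "ys = map r (map q l)"
          unfolding alt_orbit_eq[OF dq] sq by blast
        have R1: "r \<circ> q permutes set l" by (rule permutes_compose[OF assms(2) r(1)])
        have R2: "evenperm (r \<circ> q)"
          using evenperm_comp[OF permutes_perm[OF r(1)] pq] r(2) eq by simp
        have R3: "ys = map (r \<circ> q) l" using r(3) by simp
        show "ys \<in> alt_orbit l" unfolding alt_orbit_eq[OF assms(1)]
          by (rule CollectI, rule exI[where x="r \<circ> q"], intro conjI R1 R2 R3)
      qed
    next
      show "alt_orbit l \<subseteq> alt_orbit (map q l)"
      proof
        fix ys assume "ys \<in> alt_orbit l"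
        then obtain r where r: "r permutes set l" "evenperm r" "ys = map r l"
          unfolding alt_orbit_eq[OF assms(1)] by blast
        have iq: "Hilbert_Choice.inv q permutes set l" using permutes_inv[OF assms(2)] .
        have A: "r \<circ> Hilbert_Choice.inv q permutes set l" by (rule permutes_compose[OF iq r(1)])
        have B: "evenperm (r \<circ> Hilbert_Choice.inv q)"
          using evenperm_comp[OF permutes_perm[OF r(1)] permutes_perm[OF iq]] r(2) eq
            evenperm_inv[OF pq] by simp
        have C: "ys = map (r \<circ> Hilbert_Choice.inv q) (map q l)"
          using r(3) permutes_inverses(2)[OF assms(2)] by simp
        show "ys \<in> alt_orbit (map q l)" unfolding alt_orbit_eq[OF dq] sq
          by (rule CollectI, rule exI[where x="r \<circ> Hilbert_Choice.inv q"], intro conjI C A B)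
      qed
    qed
  qed
qed

lemma Delta_map_alt_orbit: "Delta_map f (alt_orbit l) = alt_orbit (map f l)"
proof -
  have "map f ` {ys. alt_related l ys} = {ys. alt_related (map f l) ys}"
  proof
    show "map f ` {ys. alt_related l ys} \<subseteq> {ys. alt_related (map f l) ys}"
    proof
      fix zs assume "zs \<in> map f ` {ys. alt_related l ys}"
      then obtain p where p: "p permutes {..<length l}" "evenperm p" "zs = map f (map (\<lambda>i. l ! p i) [0..<length l])"
        unfolding alt_related_def by auto
      have "zs = map (\<lambda>i. map f l ! p i) [0..<length (map f l)]"
        using p(3) permutes_in_image[OF p(1)] by auto
      thus "zs \<in> {ys. alt_related (map f l) ys}" unfolding alt_related_def length_map
        by (intro CollectI exI[of _ p] conjI p(1) p(2))
    qed
    show "{ys. alt_related (map f l) ys} \<subseteq> map f ` {ys. alt_related l ys}"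
    proof
      fix ys assume "ys \<in> {ys. alt_related (map f l) ys}"
      then obtain p where p: "p permutes {..<length l}" "evenperm p" "ys = map (\<lambda>i. map f l ! p i) [0..<length l]"
        unfolding alt_related_def by auto
      have "ys = map f (map (\<lambda>i. l ! p i) [0..<length l])"
        using p(3) permutes_in_image[OF p(1)] by auto
      thus "ys \<in> map f ` {ys. alt_related l ys}" unfolding alt_related_def using p by blast
    qed
  qed
  thus ?thesis unfolding Delta_map_def alt_orbit_def .
qed


locale cov =
  fixes Z :: "'z set" and Z0 :: "'y set" and \<pi> :: "'z \<Rightarrow> 'y"
  assumes finZ: "finite Z" and piZ: "\<And>z. z \<in> Z \<Longrightarrow> \<pi> z \<in> Z0"
    and fib2: "\<And>y. y \<in> Z0 \<Longrightarrow> card {z \<in> Z. \<pi> z = y} = 2"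
begin

abbreviation "sw \<equiv> sheet_swap Z \<pi>"

lemma fib_pair:
  assumes "z \<in> Z" shows "\<exists>w. {x \<in> Z. \<pi> x = \<pi> z} = {z, w} \<and> w \<noteq> z"
proof -
  have "card {x \<in> Z. \<pi> x = \<pi> z} = 2" using fib2 piZ assms by blast
  then obtain a b where ab: "{x \<in> Z. \<pi> x = \<pi> z} = {a, b}" "a \<noteq> b" by (auto simp: card_2_iff)
  have "z \<in> {a,b}" using assms ab(1) by blast
  thus ?thesis
  proof
    assume "z = a" thus ?thesis using ab by blast
  next
    assume "z \<in> {b}" hence "z = b" by simp
    thus ?thesis using ab by (intro exI[of _ a]) auto
  qed
qed

lemma sw_props:
  assumes "z \<in> Z"
  shows "sw z \<in> Z" "\<pi> (sw z) = \<pi> z" "sw z \<noteq> z" "\<And>x. x \<in> Z \<Longrightarrow> \<pi> x = \<pi> z \<Longrightarrow> x = z \<or> x = sw z"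
proof -
  obtain w where w: "{x \<in> Z. \<pi> x = \<pi> z} = {z, w}" "w \<noteq> z" using fib_pair[OF assms] by blast
  have wZ: "w \<in> Z" "\<pi> w = \<pi> z" using w(1) by blast+
  have "sw z = w" unfolding sheet_swap_def
  proof (rule the_equality)
    show "w \<in> Z \<and> \<pi> w = \<pi> z \<and> w \<noteq> z" using wZ w(2) by simp
    fix z' assume "z' \<in> Z \<and> \<pi> z' = \<pi> z \<and> z' \<noteq> z"
    hence "z' \<in> {z, w}" "z' \<noteq> z" using w(1) by blast+
    thus "z' = w" by simp
  qed
  thus "sw z \<in> Z" "\<pi> (sw z) = \<pi> z" "sw z \<noteq> z" using wZ w(2) by simp_all
  fix x assume "x \<in> Z" "\<pi> x = \<pi> z"
  hence "x \<in> {z, w}" using w(1) by blast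
  thus "x = z \<or> x = sw z" using \<open>sw z = w\<close> by simp
qed

lemma sw_sw: assumes "z \<in> Z" shows "sw (sw z) = z"
proof -
  have "z = sw z \<or> z = sw (sw z)"
    using sw_props(4)[OF sw_props(1)[OF assms] assms] sw_props(2)[OF assms] by simp
  thus ?thesis using sw_props(3)[OF assms] by metis
qed

lemma sw_inj: "inj_on sw Z"
  by (metis inj_onI sw_sw)

definition sig :: "'z \<Rightarrow> 'z" where "sig z = (if z \<in> Z then sw z else z)"

lemma sig_permutes: "sig permutes Z"
proof (rule bij_imp_permutes)
  show "bij_betw sig Z Z"
    by (rule bij_betw_byWitness[where f'=sig]) (auto simp: sig_def sw_sw sw_props(1))
qed (simp add: sig_def)

lemma sig_perm: "permutation sig"
  using permutes_perm[OF sig_permutes finZ] .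

lemma section_iff:
  "\<omega> \<in> sections Z Z0 \<pi> \<longleftrightarrow> \<omega> \<subseteq> Z \<and> (\<forall>z\<in>Z. z \<in> \<omega> \<longleftrightarrow> sw z \<notin> \<omega>)"
proof
  assume a: "\<omega> \<in> sections Z Z0 \<pi>"
  hence sub: "\<omega> \<subseteq> Z" and bij: "bij_betw \<pi> \<omega> Z0" by (auto simp: sections_def)
  have inj: "inj_on \<pi> \<omega>" using bij by (simp add: bij_betw_def)
  have img: "\<pi> ` \<omega> = Z0" using bij by (simp add: bij_betw_def)
  have key: "z \<in> \<omega> \<longleftrightarrow> sw z \<notin> \<omega>" if z: "z \<in> Z" for z
  proof
    assume zw: "z \<in> \<omega>" show "sw z \<notin> \<omega>"
    proof
      assume "sw z \<in> \<omega>"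
      hence "sw z = z" using inj_onD[OF inj _ \<open>sw z \<in> \<omega>\<close> zw] sw_props(2)[OF z] by simp
      thus False using sw_props(3)[OF z] by simp
    qed
  next
    assume n: "sw z \<notin> \<omega>"
    have "\<pi> z \<in> Z0" using piZ z by simp
    hence "\<pi> z \<in> \<pi> ` \<omega>" using img by simp
    then obtain w where w: "w \<in> \<omega>" "\<pi> w = \<pi> z" by (auto simp del: img)
    have "w \<in> Z" using w(1) sub by (rule subsetD[rotated])
    hence "w = z \<or> w = sw z" using sw_props(4)[OF z] w(2) by simp
    thus "z \<in> \<omega>" using n w(1) by auto
  qed
  show "\<omega> \<subseteq> Z \<and> (\<forall>z\<in>Z. z \<in> \<omega> \<longleftrightarrow> sw z \<notin> \<omega>)"
    by (intro conjI sub ballI key)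
next
  assume a: "\<omega> \<subseteq> Z \<and> (\<forall>z\<in>Z. z \<in> \<omega> \<longleftrightarrow> sw z \<notin> \<omega>)"
  have sub: "\<omega> \<subseteq> Z" using a by simp
  have key: "\<And>z. z \<in> Z \<Longrightarrow> z \<in> \<omega> \<longleftrightarrow> sw z \<notin> \<omega>" using a by simp
  have inj: "inj_on \<pi> \<omega>"
  proof (rule inj_onI)
    fix x y assume xy: "x \<in> \<omega>" "y \<in> \<omega>" "\<pi> x = \<pi> y"
    have xZ: "x \<in> Z" "y \<in> Z" using xy sub by auto
    hence "y = x \<or> y = sw x" using sw_props(4)[OF xZ(1) xZ(2)] xy(3) by simp
    moreover have "sw x \<notin> \<omega>" using key[OF xZ(1)] xy(1) by simp
    ultimately show "x = y" using xy(2) by auto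
  qed
  have img: "\<pi> ` \<omega> = Z0"
  proof
    show "\<pi> ` \<omega> \<subseteq> Z0" using sub piZ by auto
    show "Z0 \<subseteq> \<pi> ` \<omega>"
    proof
      fix y assume y: "y \<in> Z0"
      have "{z \<in> Z. \<pi> z = y} \<noteq> {}" using fib2[OF y] by (metis card.empty zero_neq_numeral)
      then obtain z where z: "z \<in> Z" "\<pi> z = y" by blast
      show "y \<in> \<pi> ` \<omega>"
      proof (cases "z \<in> \<omega>")
        case True thus ?thesis using z by (auto intro: image_eqI)
      next
        case False
        hence "sw z \<in> \<omega>" using key[OF z(1)] by simp
        moreover have "\<pi> (sw z) = y" using sw_props(2)[OF z(1)] z(2) by simp
        ultimately show ?thesis by (auto intro: image_eqI)
      qed
    qed
  qed
  show "\<omega> \<in> sections Z Z0 \<pi>" unfolding sections_def bij_betw_def using sub inj img by simp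
qed

lemma sec_sub: "\<omega> \<in> sections Z Z0 \<pi> \<Longrightarrow> \<omega> \<subseteq> Z"
  by (simp add: sections_def)

lemma sec_in: "\<omega> \<in> sections Z Z0 \<pi> \<Longrightarrow> z \<in> Z \<Longrightarrow> z \<in> \<omega> \<longleftrightarrow> sw z \<notin> \<omega>"
  unfolding section_iff by simp

lemma sec_compl: assumes "\<omega> \<in> sections Z Z0 \<pi>" shows "Z - \<omega> \<in> sections Z Z0 \<pi>"
  unfolding section_iff
proof (intro conjI ballI)
  show "Z - \<omega> \<subseteq> Z" by auto
  fix z assume z: "z \<in> Z"
  show "z \<in> Z - \<omega> \<longleftrightarrow> sw z \<notin> Z - \<omega>"
    using sec_in[OF assms z] sw_props(1)[OF z] z by simp
qed

lemma sec_compl_img: assumes "\<omega> \<in> sections Z Z0 \<pi>" shows "Z - \<omega> = sw ` \<omega>"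
proof
  show "Z - \<omega> \<subseteq> sw ` \<omega>"
  proof
    fix z assume z: "z \<in> Z - \<omega>"
    hence zZ: "z \<in> Z" by simp
    have "sw z \<in> \<omega>" using sec_in[OF assms zZ] z by simp
    moreover have "z = sw (sw z)" using sw_sw[OF zZ] by simp
    ultimately show "z \<in> sw ` \<omega>" by (metis image_eqI)
  qed
  show "sw ` \<omega> \<subseteq> Z - \<omega>"
  proof
    fix z assume "z \<in> sw ` \<omega>"
    then obtain x where x: "x \<in> \<omega>" "z = sw x" by auto
    have xZ: "x \<in> Z" using x(1) sec_sub[OF assms] by auto
    show "z \<in> Z - \<omega>" using sec_in[OF assms xZ] x sw_props(1)[OF xZ] by simp
  qed
qed

lemma sec_card: "\<omega> \<in> sections Z Z0 \<pi> \<Longrightarrow> card \<omega> = card Z0"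
  unfolding sections_def using bij_betw_same_card by blast

lemma sec_finite: "\<omega> \<in> sections Z Z0 \<pi> \<Longrightarrow> finite \<omega>"
  using sec_sub finZ finite_subset by blast

definition dl :: "'z list \<Rightarrow> 'z list" where "dl xs = xs @ map sw xs"

lemma dl_ord:
  assumes "\<omega> \<in> sections Z Z0 \<pi>" "xs \<in> orderings \<omega>"
  shows "distinct (dl xs)" "set (dl xs) = Z"
proof -
  have d: "distinct xs" "set xs = \<omega>" using assms(2) by (auto simp: orderings_def)
  have sub: "\<omega> \<subseteq> Z" using sec_sub[OF assms(1)] .
  have "distinct (map sw xs)" using d sub sw_inj by (simp add: distinct_map inj_on_subset)
  moreover have "set xs \<inter> set (map sw xs) = {}"
    using d sub sec_in[OF assms(1)] by auto
  ultimately show "distinct (dl xs)" using d by (simp add: dl_def)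
  show "set (dl xs) = Z" using d sec_compl_img[OF assms(1)] sub by (auto simp: dl_def)
qed

lemma perm_between:
  assumes "distinct xs" "distinct ys" "set xs = set ys"
  shows "\<exists>q. q permutes set xs \<and> ys = map q xs"
proof -
  have len: "length xs = length ys" using assms by (metis distinct_card)
  define g where "g = the_inv_into {..<length xs} ((!) xs)"
  have b: "bij_betw ((!) xs) {..<length xs} (set xs)" using nth_bij[OF assms(1)] .
  have bg: "bij_betw g (set xs) {..<length xs}" unfolding g_def
    using b bij_betw_the_inv_into by blast
  have by': "bij_betw ((!) ys) {..<length xs} (set xs)" using nth_bij[OF assms(2)] len assms(3) by simp
  define q where "q x = (if x \<in> set xs then ys ! g x else x)" for x
  have "bij_betw ((!) ys \<circ> g) (set xs) (set xs)" by (rule bij_betw_trans[OF bg by'])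
  hence "bij_betw q (set xs) (set xs)" by (rule bij_betw_cong[THEN iffD1, rotated]) (simp add: q_def)
  hence qp: "q permutes set xs" by (rule bij_imp_permutes) (simp add: q_def)
  have gx: "g (xs ! i) = i" if "i < length xs" for i
    unfolding g_def using b that by (simp add: bij_betw_def the_inv_into_f_f)
  have "ys = map q xs"
  proof (rule nth_equalityI)
    show "length ys = length (map q xs)" using len by simp
    fix i assume "i < length ys"
    thus "ys ! i = map q xs ! i" using len gx by (simp add: q_def)
  qed
  thus ?thesis using qp by blast
qed

end


context cov begin

lemma delta_eq:
  assumes w: "\<omega> \<in> sections Z Z0 \<pi>" and xs: "xs \<in> orderings \<omega>"
  shows "delta_map Z \<pi> \<omega> = alt_orbit (dl xs)"
proof -
  define ys where "ys = (SOME xs. xs \<in> orderings \<omega>)"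
  have ys: "ys \<in> orderings \<omega>" unfolding ys_def
    using orderings_exist[OF sec_finite[OF w]] by (rule someI_ex)
  have dm: "delta_map Z \<pi> \<omega> = alt_orbit (dl ys)" unfolding delta_map_def dl_def ys_def Let_def by simp
  have dx: "distinct xs" "set xs = \<omega>" using xs by (auto simp: orderings_def)
  have dy: "distinct ys" "set ys = \<omega>" using ys by (auto simp: orderings_def)
  obtain q where q: "q permutes \<omega>" "ys = map q xs"
    using perm_between[OF dx(1) dy(1)] dx(2) dy(2) by auto
  have sub: "\<omega> \<subseteq> Z" by (rule sec_sub[OF w])
  define Q where "Q = q \<circ> sig \<circ> q \<circ> sig"
  have qZ: "q permutes Z" using permutes_subset[OF q(1) sub] .
  have QZ: "Q permutes Z" unfolding Q_def by (intro permutes_compose qZ sig_permutes)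
  have pq: "permutation q" using permutes_perm[OF qZ finZ] .
  have QE: "evenperm Q" unfolding Q_def
    apply (simp add: evenperm_comp permutation_compose pq sig_perm) by blast
  have A: "Q x = q x" if "x \<in> \<omega>" for x
  proof -
    have xZ: "x \<in> Z" using that sub by auto
    have "sw x \<notin> \<omega>" using sec_in[OF w xZ] that by simp
    hence "q (sw x) = sw x" using permutes_not_in[OF q(1)] by simp
    thus ?thesis unfolding Q_def using xZ sw_sw[OF xZ] sw_props(1)[OF xZ] by (simp add: sig_def)
  qed
  have B: "Q (sw x) = sw (q x)" if "x \<in> \<omega>" for x
  proof -
    have xZ: "x \<in> Z" using that sub by auto
    have qx: "q x \<in> \<omega>" using permutes_in_image[OF q(1)] that by simp
    have qxZ: "q x \<in> Z" using qx sub by auto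
    have "sw (q x) \<notin> \<omega>" using sec_in[OF w qxZ] qx by simp
    hence "q (sw (q x)) = sw (q x)" using permutes_not_in[OF q(1)] by simp
    thus ?thesis unfolding Q_def using xZ sw_sw[OF xZ] sw_props(1)[OF xZ] sw_props(1)[OF qxZ] qxZ
      by (simp add: sig_def)
  qed
  have m1: "map Q xs = map q xs" by (rule map_cong[OF refl]) (use A dx(2) in auto)
  have m2: "map Q (map sw xs) = map sw (map q xs)" by (simp add: o_def) (use B dx(2) in auto)
  have mapQ: "map Q (dl xs) = dl ys" unfolding dl_def q(2) using m1 m2 by simp
  have QS: "Q permutes set (dl xs)" using QZ dl_ord(2)[OF w xs] by simp
  have "alt_orbit (map Q (dl xs)) = alt_orbit (dl xs)"
    using alt_orbit_map_iff[OF dl_ord(1)[OF w xs] QS] QE by simp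
  thus ?thesis using dm mapQ by simp
qed

lemma delta_in_Delta:
  assumes w: "\<omega> \<in> sections Z Z0 \<pi>"
  shows "delta_map Z \<pi> \<omega> \<in> Delta Z"
proof -
  obtain xs where xs: "xs \<in> orderings \<omega>" using orderings_exist[OF sec_finite[OF w]] by blast
  have "dl xs \<in> orderings Z" using dl_ord[OF w xs] by (simp add: orderings_def)
  thus ?thesis unfolding delta_eq[OF w xs] Delta_def by (rule imageI)
qed

lemma QK:
  assumes w: "\<omega> \<in> sections Z Z0 \<pi>" and K: "K \<subseteq> \<omega>"
  shows "(\<lambda>x. if x \<in> K \<union> sw ` K then sw x else x) permutes Z \<and>
         (evenperm (\<lambda>x. if x \<in> K \<union> sw ` K then sw x else x) \<longleftrightarrow> even (card K))"
proof -
  have "finite K" using K sec_finite[OF w] finite_subset by blast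
  thus ?thesis using K
  proof (induction K rule: finite_induct)
    case empty
    have "(\<lambda>x. x) permutes Z" using permutes_id[of Z] by (simp add: id_def)
    thus ?case by simp
  next
    case (insert a K)
    define QK where "QK = (\<lambda>x. if x \<in> K \<union> sw ` K then sw x else x)"
    have IH: "QK permutes Z" "evenperm QK \<longleftrightarrow> even (card K)" using insert unfolding QK_def by auto
    have sub: "\<omega> \<subseteq> Z" by (rule sec_sub[OF w])
    have aw: "a \<in> \<omega>" using insert by simp
    have aZ: "a \<in> Z" using aw sub by auto
    have Kw: "K \<subseteq> \<omega>" using insert by simp
    have swa: "sw a \<notin> \<omega>" using sec_in[OF w aZ] aw by simp
    have swaZ: "sw a \<in> Z" using sw_props(1)[OF aZ] .
    have swK: "sw k \<notin> \<omega>" if "k \<in> K" for k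
      using sec_in[OF w, of k] that Kw sub by auto
    have eq: "(\<lambda>x. if x \<in> insert a K \<union> sw ` insert a K then sw x else x) = Transposition.transpose a (sw a) \<circ> QK"
    proof
      fix x
      show "(if x \<in> insert a K \<union> sw ` insert a K then sw x else x) = (Transposition.transpose a (sw a) \<circ> QK) x"
      proof (cases "x = a")
        case True
        have "a \<notin> sw ` K" using swK aw by auto
        hence "QK a = a" unfolding QK_def using insert(2) by simp
        thus ?thesis using True by simp
      next
        case xa: False
        show ?thesis
        proof (cases "x = sw a")
          case True
          have "sw a \<notin> K" using swa Kw by auto
          moreover have "sw a \<notin> sw ` K"
          proof
            assume "sw a \<in> sw ` K"
            then obtain k where "k \<in> K" "sw a = sw k" by auto
            hence "a = k" using sw_sw[OF aZ] sw_sw[of k] Kw sub by (metis subsetD)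
            thus False using insert(2) \<open>k \<in> K\<close> by simp
          qed
          ultimately have "QK (sw a) = sw a" unfolding QK_def by simp
          thus ?thesis using True sw_sw[OF aZ] by simp
        next
          case xsa: False
          show ?thesis
          proof (cases "x \<in> K \<union> sw ` K")
            case True
            have Q1: "QK x = sw x" unfolding QK_def using True by simp
            have "sw x \<noteq> a"
            proof
              assume h: "sw x = a"
              show False
              proof (cases "x \<in> K")
                case True
                hence "x = sw a" using h sw_sw[of x] Kw sub by (metis subsetD)
                thus False using xsa by simp
              next
                case False
                then obtain k where "k \<in> K" "x = sw k" using \<open>x \<in> K \<union> sw ` K\<close> by auto
                hence "sw x = k" using sw_sw[of k] Kw sub by (metis subsetD)
                thus False using h \<open>k \<in> K\<close> insert(2) by simp
              qed
            qed
            moreover have "sw x \<noteq> sw a"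
            proof
              assume h: "sw x = sw a"
              have xZ: "x \<in> Z" using True Kw sub sw_props(1) by auto
              have "x = a" using h sw_sw[OF xZ] sw_sw[OF aZ] by metis
              thus False using xa by simp
            qed
            ultimately show ?thesis using True Q1 by simp
          next
            case False
            hence "QK x = x" unfolding QK_def by simp
            thus ?thesis using False xa xsa by simp
          qed
        qed
      qed
    qed
    have tp: "Transposition.transpose a (sw a) permutes Z" by (rule permutes_swap_id[OF aZ swaZ])
    have P: "Transposition.transpose a (sw a) \<circ> QK permutes Z" by (rule permutes_compose[OF IH(1) tp])
    have "evenperm (Transposition.transpose a (sw a) \<circ> QK) \<longleftrightarrow> \<not> evenperm QK"
      using evenperm_comp[OF permutation_swap_id[of a "sw a"] permutes_perm[OF IH(1) finZ]] evenperm_swap[of a "sw a"]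
        sw_props(3)[OF aZ] by auto
    moreover have "card (insert a K) = Suc (card K)" using insert(1,2) by simp
    ultimately show ?case using P eq IH(2) by simp
  qed
qed

lemma parity:
  assumes w: "\<omega> \<in> sections Z Z0 \<pi>" and w': "\<omega>' \<in> sections Z Z0 \<pi>"
  shows "delta_map Z \<pi> \<omega> = delta_map Z \<pi> \<omega>' \<longleftrightarrow> even (card (\<omega> - \<omega>'))"
proof -
  obtain xs where xs: "xs \<in> orderings \<omega>" using orderings_exist[OF sec_finite[OF w]] by blast
  have dx: "distinct xs" "set xs = \<omega>" using xs by (auto simp: orderings_def)
  have sub: "\<omega> \<subseteq> Z" "\<omega>' \<subseteq> Z" using sec_sub w w' by auto
  define \<phi> where "\<phi> x = (if x \<in> \<omega>' then x else sw x)" for x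
  define ys where "ys = map \<phi> xs"
  have injphi: "inj_on \<phi> \<omega>"
  proof (rule inj_onI)
    fix x y assume x: "x \<in> \<omega>" and y: "y \<in> \<omega>" and e: "\<phi> x = \<phi> y"
    have xZ: "x \<in> Z" and yZ: "y \<in> Z" using x y sub by auto
    have sx: "sw x \<notin> \<omega>" and sy: "sw y \<notin> \<omega>" using sec_in[OF w xZ] sec_in[OF w yZ] x y by auto
    show "x = y"
    proof (cases "x \<in> \<omega>'")
      case True note xi = True
      show ?thesis
      proof (cases "y \<in> \<omega>'")
        case True thus ?thesis using e xi by (simp add: \<phi>_def)
      next
        case False
        hence "x = sw y" using e xi by (simp add: \<phi>_def)
        thus ?thesis using x sy by simp
      qed
    next
      case False note xn = False
      show ?thesis
      proof (cases "y \<in> \<omega>'")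
        case True
        hence "sw x = y" using e xn by (simp add: \<phi>_def)
        thus ?thesis using y sx by simp
      next
        case False
        hence "sw x = sw y" using e xn by (simp add: \<phi>_def)
        thus ?thesis using sw_sw[OF xZ] sw_sw[OF yZ] by metis
      qed
    qed
  qed
  have imphi: "\<phi> ` \<omega> = \<omega>'"
  proof
    show "\<phi> ` \<omega> \<subseteq> \<omega>'"
    proof
      fix u assume "u \<in> \<phi> ` \<omega>"
      then obtain x where x: "x \<in> \<omega>" "u = \<phi> x" by auto
      have xZ: "x \<in> Z" using x sub by auto
      show "u \<in> \<omega>'" using x sec_in[OF w' xZ] by (cases "x \<in> \<omega>'") (auto simp: \<phi>_def)
    qed
    show "\<omega>' \<subseteq> \<phi> ` \<omega>"
    proof
      fix u assume u: "u \<in> \<omega>'"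
      have uZ: "u \<in> Z" using u sub by auto
      show "u \<in> \<phi> ` \<omega>"
      proof (cases "u \<in> \<omega>")
        case True
        hence "\<phi> u = u" using u by (simp add: \<phi>_def)
        thus ?thesis using True by (metis imageI)
      next
        case False
        hence "sw u \<in> \<omega>" using sec_in[OF w uZ] by simp
        moreover have "sw u \<notin> \<omega>'" using sec_in[OF w' uZ] u by simp
        ultimately have "\<phi> (sw u) = u" "sw u \<in> \<omega>" using sw_sw[OF uZ] by (auto simp: \<phi>_def)
        thus ?thesis by (metis imageI)
      qed
    qed
  qed
  have ys: "ys \<in> orderings \<omega>'" unfolding orderings_def ys_def
    using dx injphi imphi by (simp add: distinct_map)
  define K where "K = \<omega> - \<omega>'"
  define Q where "Q = (\<lambda>x. if x \<in> K \<union> sw ` K then sw x else x)"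
  have QK': "Q permutes Z" "evenperm Q \<longleftrightarrow> even (card K)"
    using QK[OF w, of K] unfolding Q_def K_def by auto
  have A: "Q x = \<phi> x" if x: "x \<in> \<omega>" for x
  proof -
    have xZ: "x \<in> Z" using x sub by auto
    have "x \<notin> sw ` K"
    proof
      assume "x \<in> sw ` K"
      then obtain k where "k \<in> K" "x = sw k" by auto
      moreover have "k \<in> Z" "k \<in> \<omega>" using \<open>k \<in> K\<close> sub by (auto simp: K_def)
      ultimately show False using sec_in[OF w, of k] x by simp
    qed
    thus ?thesis using x by (auto simp: Q_def \<phi>_def K_def)
  qed
  have B: "Q (sw x) = sw (\<phi> x)" if x: "x \<in> \<omega>" for x
  proof -
    have xZ: "x \<in> Z" using x sub by auto
    have sx: "sw x \<notin> \<omega>" using sec_in[OF w xZ] x by simp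
    show ?thesis
    proof (cases "x \<in> \<omega>'")
      case True
      have "sw x \<notin> sw ` K"
      proof
        assume "sw x \<in> sw ` K"
        then obtain k where "k \<in> K" "sw x = sw k" by auto
        moreover have "k \<in> Z" using \<open>k \<in> K\<close> sub by (auto simp: K_def)
        ultimately have "x = k" using sw_sw[OF xZ] sw_sw[of k] by metis
        thus False using True \<open>k \<in> K\<close> by (simp add: K_def)
      qed
      moreover have "sw x \<notin> K" using sx by (simp add: K_def)
      ultimately show ?thesis using True by (simp add: Q_def \<phi>_def)
    next
      case False
      have "sw x \<in> sw ` K" using False x by (simp add: K_def)
      thus ?thesis using False by (simp add: Q_def \<phi>_def)
    qed
  qed
  have m1: "map Q xs = map \<phi> xs" by (rule map_cong[OF refl]) (use A dx(2) in auto)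
  have m2: "map Q (map sw xs) = map sw (map \<phi> xs)" by (simp add: o_def) (use B dx(2) in auto)
  have mapQ: "map Q (dl xs) = dl ys" unfolding dl_def ys_def using m1 m2 by simp
  have QS: "Q permutes set (dl xs)" using QK'(1) dl_ord(2)[OF w xs] by simp
  have "alt_orbit (map Q (dl xs)) = alt_orbit (dl xs) \<longleftrightarrow> evenperm Q"
    by (rule alt_orbit_map_iff[OF dl_ord(1)[OF w xs] QS])
  hence "delta_map Z \<pi> \<omega>' = delta_map Z \<pi> \<omega> \<longleftrightarrow> even (card K)"
    using delta_eq[OF w xs] delta_eq[OF w' ys] mapQ QK'(2) by simp
  thus ?thesis unfolding K_def by auto
qed

end


context cov begin

lemma fib_ne: "y \<in> Z0 \<Longrightarrow> \<exists>z. z \<in> Z \<and> \<pi> z = y"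
proof -
  assume y: "y \<in> Z0"
  have "{z \<in> Z. \<pi> z = y} \<noteq> {}" using fib2[OF y] by (metis card.empty zero_neq_numeral)
  thus ?thesis by blast
qed

lemma finZ0: "finite Z0"
proof -
  have "Z0 \<subseteq> \<pi> ` Z"
  proof
    fix y assume y: "y \<in> Z0"
    then obtain z where "z \<in> Z" "\<pi> z = y" using fib_ne by blast
    thus "y \<in> \<pi> ` Z" by blast
  qed
  thus ?thesis using finZ finite_subset by blast
qed

lemma fin_sections: "finite (sections Z Z0 \<pi>)"
proof -
  have "sections Z Z0 \<pi> \<subseteq> Pow Z" by (auto simp: sections_def)
  thus ?thesis using finZ finite_subset by blast
qed

definition flip :: "'y \<Rightarrow> 'z set \<Rightarrow> 'z set" where
  "flip y0 \<omega> = (\<omega> - {z\<in>Z. \<pi> z = y0}) \<union> ({z\<in>Z. \<pi> z = y0} - \<omega>)"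

lemma flip_sec: assumes w: "\<omega> \<in> sections Z Z0 \<pi>" shows "flip y0 \<omega> \<in> sections Z Z0 \<pi>"
  unfolding section_iff
proof (intro conjI ballI)
  show "flip y0 \<omega> \<subseteq> Z" using sec_sub[OF w] by (auto simp: flip_def)
  fix z assume z: "z \<in> Z"
  have "\<pi> (sw z) = \<pi> z" "sw z \<in> Z" using sw_props[OF z] by auto
  thus "z \<in> flip y0 \<omega> \<longleftrightarrow> sw z \<notin> flip y0 \<omega>" using sec_in[OF w z] z by (auto simp: flip_def)
qed

lemma flip_flip: "\<omega> \<subseteq> Z \<Longrightarrow> flip y0 (flip y0 \<omega>) = \<omega>"
  by (auto simp: flip_def)

lemma flip_card: assumes y0: "y0 \<in> Z0" and w: "\<omega> \<in> sections Z Z0 \<pi>"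
  shows "card (\<omega> - flip y0 \<omega>) = 1"
proof -
  obtain z where z: "z \<in> Z" "\<pi> z = y0" using fib_ne[OF y0] by blast
  have F: "{x\<in>Z. \<pi> x = y0} = {z, sw z}"
  proof
    show "{x\<in>Z. \<pi> x = y0} \<subseteq> {z, sw z}" using sw_props(4)[OF z(1)] z(2) by auto
    show "{z, sw z} \<subseteq> {x\<in>Z. \<pi> x = y0}" using sw_props(1,2)[OF z(1)] z by auto
  qed
  have "\<omega> - flip y0 \<omega> = \<omega> \<inter> {z, sw z}" unfolding flip_def F by auto
  also have "\<dots> = (if z \<in> \<omega> then {z} else {sw z})" using sec_in[OF w z(1)] by auto
  finally show ?thesis by simp
qed

lemma card_sections: "card (sections Z Z0 \<pi>) = 2 ^ card Z0"
proof -
  define fib where "fib y = {z \<in> Z. \<pi> z = y}" for y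
  have bij: "bij_betw (\<lambda>f. f ` Z0) (PiE Z0 fib) (sections Z Z0 \<pi>)"
  proof (rule bij_betw_imageI)
    show "inj_on (\<lambda>f. f ` Z0) (PiE Z0 fib)"
    proof (rule inj_onI)
      fix f g assume f: "f \<in> PiE Z0 fib" and g: "g \<in> PiE Z0 fib" and e: "f ` Z0 = g ` Z0"
      show "f = g"
      proof (rule PiE_ext[OF f g])
        fix y assume y: "y \<in> Z0"
        have "f y \<in> g ` Z0" using e y by blast
        then obtain y' where y': "y' \<in> Z0" "f y = g y'" by auto
        have "f y \<in> fib y" using f y by (rule PiE_mem)
        hence "\<pi> (f y) = y" by (simp add: fib_def)
        moreover have "g y' \<in> fib y'" using g y'(1) by (rule PiE_mem)
        hence "\<pi> (g y') = y'" by (simp add: fib_def)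
        ultimately have "y = y'" using y' by simp
        thus "f y = g y" using y' by simp
      qed
    qed
    show "(\<lambda>f. f ` Z0) ` PiE Z0 fib = sections Z Z0 \<pi>"
    proof
      show "(\<lambda>f. f ` Z0) ` PiE Z0 fib \<subseteq> sections Z Z0 \<pi>"
      proof
        fix S assume "S \<in> (\<lambda>f. f ` Z0) ` PiE Z0 fib"
        then obtain f where f: "f \<in> PiE Z0 fib" "S = f ` Z0" by auto
        have fy: "f y \<in> Z \<and> \<pi> (f y) = y" if "y \<in> Z0" for y
        proof -
          have "f y \<in> fib y" using f(1) that by (rule PiE_mem)
          thus ?thesis by (simp add: fib_def)
        qed
        have "S \<subseteq> Z" using fy f(2) by auto
        moreover have "inj_on \<pi> S"
        proof (rule inj_onI)
          fix a b assume "a \<in> S" "b \<in> S" "\<pi> a = \<pi> b"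
          then obtain y y' where "y \<in> Z0" "y' \<in> Z0" "a = f y" "b = f y'" "\<pi> a = \<pi> b" using f(2) by auto
          thus "a = b" using fy by metis
        qed
        moreover have "\<pi> ` S = Z0"
        proof -
          have "\<pi> ` S = (\<lambda>y. \<pi> (f y)) ` Z0" using f(2) by (simp add: image_image)
          also have "\<dots> = (\<lambda>y. y) ` Z0" by (rule image_cong) (use fy in auto)
          finally show ?thesis by simp
        qed
        ultimately show "S \<in> sections Z Z0 \<pi>" by (simp add: sections_def bij_betw_def)
      qed
      show "sections Z Z0 \<pi> \<subseteq> (\<lambda>f. f ` Z0) ` PiE Z0 fib"
      proof
        fix S assume S: "S \<in> sections Z Z0 \<pi>"
        have bS: "bij_betw \<pi> S Z0" and sub: "S \<subseteq> Z" using S by (auto simp: sections_def)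
        define f where "f = restrict (the_inv_into S \<pi>) Z0"
        have bi: "bij_betw (the_inv_into S \<pi>) Z0 S" using bij_betw_the_inv_into[OF bS] .
        have "f \<in> PiE Z0 fib"
        proof (rule PiE_I)
          fix y assume y: "y \<in> Z0"
          have "the_inv_into S \<pi> y \<in> S" using bi y by (auto simp: bij_betw_def)
          moreover have "\<pi> (the_inv_into S \<pi> y) = y" using f_the_inv_into_f_bij_betw[OF bS y] .
          ultimately show "f y \<in> fib y" using y sub by (auto simp: f_def fib_def)
        next
          fix y assume "y \<notin> Z0" thus "f y = undefined" by (simp add: f_def)
        qed
        moreover have "f ` Z0 = S"
        proof -
          have "f ` Z0 = the_inv_into S \<pi> ` Z0" unfolding f_def by (rule image_cong) auto
          thus ?thesis using bi by (simp add: bij_betw_def)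
        qed
        ultimately show "S \<in> (\<lambda>f. f ` Z0) ` PiE Z0 fib" by blast
      qed
    qed
  qed
  have "card (PiE Z0 fib) = (\<Prod>y\<in>Z0. card (fib y))" by (rule card_PiE[OF finZ0])
  also have "\<dots> = (\<Prod>y\<in>Z0. 2)" by (rule prod.cong) (auto simp: fib_def fib2)
  also have "\<dots> = 2 ^ card Z0" by simp
  finally show ?thesis using bij_betw_same_card[OF bij] by simp
qed

end

locale ocov = cov +
  fixes ori :: "nat \<Rightarrow> 'a list set" and n :: nat
  assumes cardZ0: "card Z0 = n" and evn: "even n" and n2: "n \<ge> 2"
    and DZ: "Delta Z = {ori 1, ori 2}" and o12: "ori 1 \<noteq> ori 2"
begin

abbreviation "C i \<equiv> C_part Z Z0 \<pi> ori i"

lemma C_iff: "\<omega> \<in> C i \<longleftrightarrow> \<omega> \<in> sections Z Z0 \<pi> \<and> delta_map Z \<pi> \<omega> = ori i"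
  by (simp add: C_part_def)

lemma delta_12: "\<omega> \<in> sections Z Z0 \<pi> \<Longrightarrow> delta_map Z \<pi> \<omega> = ori 1 \<or> delta_map Z \<pi> \<omega> = ori 2"
  using delta_in_Delta DZ by auto

lemma cover: "sections Z Z0 \<pi> = C 1 \<union> C 2"
  using delta_12 by (auto simp: C_part_def)

lemma disj: "C 1 \<inter> C 2 = {}"
  using o12 by (auto simp: C_part_def)

lemma same_class:
  assumes "\<omega> \<in> sections Z Z0 \<pi>" "\<omega>' \<in> sections Z Z0 \<pi>"
  shows "((\<omega> \<in> C 1 \<and> \<omega>' \<in> C 1) \<or> (\<omega> \<in> C 2 \<and> \<omega>' \<in> C 2)) \<longleftrightarrow> delta_map Z \<pi> \<omega> = delta_map Z \<pi> \<omega>'"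
  using delta_12[OF assms(1)] delta_12[OF assms(2)] o12 assms by (auto simp: C_part_def)

lemma card_sec: "\<omega> \<in> sections Z Z0 \<pi> \<Longrightarrow> card \<omega> = n"
  using sec_card cardZ0 by simp

lemma parity_int:
  assumes w: "\<omega> \<in> sections Z Z0 \<pi>"
  shows "even (card (\<omega> - \<omega>')) \<longleftrightarrow> even (card (\<omega> \<inter> \<omega>'))"
proof -
  have f: "finite \<omega>" using sec_finite[OF w] .
  have "card \<omega> = card (\<omega> - \<omega>') + card (\<omega> \<inter> \<omega>')"
  proof -
    have "\<omega> = (\<omega> - \<omega>') \<union> (\<omega> \<inter> \<omega>')" by auto
    hence "card \<omega> = card ((\<omega> - \<omega>') \<union> (\<omega> \<inter> \<omega>'))" by simp
    also have "\<dots> = card (\<omega> - \<omega>') + card (\<omega> \<inter> \<omega>')"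
      by (rule card_Un_disjoint) (use f in auto)
    finally show ?thesis .
  qed
  thus ?thesis using card_sec[OF w] evn by auto
qed

lemma compl_C: assumes "\<omega> \<in> C i" shows "Z - \<omega> \<in> C i"
proof -
  have w: "\<omega> \<in> sections Z Z0 \<pi>" using assms by (simp add: C_iff)
  have w': "Z - \<omega> \<in> sections Z Z0 \<pi>" using sec_compl[OF w] .
  have "\<omega> - (Z - \<omega>) = \<omega>" using sec_sub[OF w] by auto
  hence "even (card (\<omega> - (Z - \<omega>)))" using card_sec[OF w] evn by simp
  hence "delta_map Z \<pi> \<omega> = delta_map Z \<pi> (Z - \<omega>)" using parity[OF w w'] by simp
  thus ?thesis using assms w' by (simp add: C_iff)
qed

lemma Z_ne: "Z \<noteq> {}"
proof -
  have "Z0 \<noteq> {}" using cardZ0 n2 by auto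
  then obtain y where "y \<in> Z0" by blast
  thus ?thesis using fib_ne by blast
qed

lemma compl_ne: assumes "\<omega> \<in> sections Z Z0 \<pi>" shows "Z - \<omega> \<noteq> \<omega>"
proof
  assume h: "Z - \<omega> = \<omega>"
  hence "\<omega> = {}" by blast
  hence "Z = {}" using h by simp
  thus False using Z_ne by simp
qed

lemma card_C: assumes i: "i \<in> {1::nat, 2}" shows "card (C i) = 2 ^ (n - 1)"
proof -
  obtain y0 where y0: "y0 \<in> Z0" using cardZ0 n2 by (metis card.empty ex_in_conv not_numeral_le_zero)
  have fl: "flip y0 \<omega> \<in> C 2" if "\<omega> \<in> C 1" for \<omega>
  proof -
    have w: "\<omega> \<in> sections Z Z0 \<pi>" using that by (simp add: C_iff)
    have w': "flip y0 \<omega> \<in> sections Z Z0 \<pi>" using flip_sec[OF w] .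
    have "delta_map Z \<pi> \<omega> \<noteq> delta_map Z \<pi> (flip y0 \<omega>)" using parity[OF w w'] flip_card[OF y0 w] by simp
    thus ?thesis using delta_12[OF w'] that w' by (auto simp: C_iff)
  qed
  have fl2: "flip y0 \<omega> \<in> C 1" if "\<omega> \<in> C 2" for \<omega>
  proof -
    have w: "\<omega> \<in> sections Z Z0 \<pi>" using that by (simp add: C_iff)
    have w': "flip y0 \<omega> \<in> sections Z Z0 \<pi>" using flip_sec[OF w] .
    have "delta_map Z \<pi> \<omega> \<noteq> delta_map Z \<pi> (flip y0 \<omega>)" using parity[OF w w'] flip_card[OF y0 w] by simp
    thus ?thesis using delta_12[OF w'] that w' by (auto simp: C_iff)
  qed
  have ff: "flip y0 (flip y0 \<omega>) = \<omega>" if "\<omega> \<in> C j" for \<omega> j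
    using flip_flip sec_sub that by (simp add: C_iff)
  have "bij_betw (flip y0) (C 1) (C 2)"
    by (rule bij_betw_byWitness[where f'="flip y0"]) (use fl fl2 ff in auto)
  hence eqc: "card (C 1) = card (C 2)" by (rule bij_betw_same_card)
  have "card (sections Z Z0 \<pi>) = card (C 1) + card (C 2)"
    unfolding cover by (rule card_Un_disjoint) (use fin_sections cover disj in auto)
  hence "2 ^ n = card (C 1) + card (C 2)" using card_sections cardZ0 by simp
  moreover have "(2::nat) ^ n = 2 * 2 ^ (n - 1)" using n2 by (metis Suc_diff_1 not_numeral_le_zero not_gr0 power_Suc)
  ultimately have "card (C 1) = 2 ^ (n - 1)" "card (C 2) = 2 ^ (n - 1)" using eqc by auto
  thus ?thesis using i by auto
qed

end


lemma group_action_sets: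
  assumes ga: "group_action G E \<phi>" and CP: "C \<subseteq> Pow E"
    and st: "\<And>g S. g \<in> carrier G \<Longrightarrow> S \<in> C \<Longrightarrow> \<phi> g ` S \<in> C"
  shows "group_action G C (\<lambda>g. \<lambda>S\<in>C. \<phi> g ` S)"
proof -
  have gG: "group G" using ga unfolding group_action_def group_hom_def by simp
  let ?F = "\<lambda>g. \<lambda>S\<in>C. \<phi> g ` S"
  have comp: "\<phi> (g \<otimes>\<^bsub>G\<^esub> h) ` S = \<phi> g ` (\<phi> h ` S)" if "g \<in> carrier G" "h \<in> carrier G" "S \<in> C" for g h S
  proof -
    have "S \<subseteq> E" using that CP by auto
    hence "\<And>x. x \<in> S \<Longrightarrow> \<phi> (g \<otimes>\<^bsub>G\<^esub> h) x = \<phi> g (\<phi> h x)"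
      using group_action.composition_rule[OF ga _ that(1,2)] by auto
    thus ?thesis unfolding image_image by (rule image_cong[OF refl])
  qed
  have one: "\<phi> \<one>\<^bsub>G\<^esub> ` S = S" if "S \<in> C" for S
  proof -
    have "S \<subseteq> E" using that CP by auto
    moreover have "\<phi> \<one>\<^bsub>G\<^esub> x = x" if "x \<in> E" for x
      using fun_cong[OF group_action.id_eq_one[OF ga], of x] that by simp
    ultimately have "\<phi> \<one>\<^bsub>G\<^esub> ` S = (\<lambda>x. x) ` S" by (intro image_cong[OF refl]) auto
    thus ?thesis by simp
  qed
  have inBij: "?F g \<in> Bij C" if g: "g \<in> carrier G" for g
  proof -
    have ig: "inv\<^bsub>G\<^esub> g \<in> carrier G" using gG g by (simp add: group.inv_closed)
    have "bij_betw (?F g) C C"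
    proof (rule bij_betw_byWitness[where f'="?F (inv\<^bsub>G\<^esub> g)"])
      show "\<forall>a\<in>C. ?F (inv\<^bsub>G\<^esub> g) (?F g a) = a"
      proof
        fix a assume a: "a \<in> C"
        have "?F (inv\<^bsub>G\<^esub> g) (?F g a) = \<phi> (inv\<^bsub>G\<^esub> g) ` \<phi> g ` a" using a st[OF g a] by simp
        also have "\<dots> = \<phi> (inv\<^bsub>G\<^esub> g \<otimes>\<^bsub>G\<^esub> g) ` a" using comp[OF ig g a] by simp
        also have "\<dots> = a" using one[OF a] gG g by (simp add: group.l_inv)
        finally show "?F (inv\<^bsub>G\<^esub> g) (?F g a) = a" .
      qed
      show "\<forall>a\<in>C. ?F g (?F (inv\<^bsub>G\<^esub> g) a) = a"
      proof
        fix a assume a: "a \<in> C"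
        have "?F g (?F (inv\<^bsub>G\<^esub> g) a) = \<phi> g ` \<phi> (inv\<^bsub>G\<^esub> g) ` a" using a st[OF ig a] by simp
        also have "\<dots> = \<phi> (g \<otimes>\<^bsub>G\<^esub> inv\<^bsub>G\<^esub> g) ` a" using comp[OF g ig a] by simp
        also have "\<dots> = a" using one[OF a] gG g by (simp add: group.r_inv)
        finally show "?F g (?F (inv\<^bsub>G\<^esub> g) a) = a" .
      qed
      show "?F g ` C \<subseteq> C" using st[OF g] by auto
      show "?F (inv\<^bsub>G\<^esub> g) ` C \<subseteq> C" using st[OF ig] by auto
    qed
    thus ?thesis unfolding Bij_def by simp
  qed
  have hom: "?F \<in> hom G (BijGroup C)"
  proof (rule homI)
    fix g assume "g \<in> carrier G" thus "?F g \<in> carrier (BijGroup C)" using inBij by (simp add: BijGroup_def)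
  next
    fix g h assume g: "g \<in> carrier G" and h: "h \<in> carrier G"
    have gh: "g \<otimes>\<^bsub>G\<^esub> h \<in> carrier G" using gG g h by (simp add: group.is_monoid monoid.m_closed)
    show "?F (g \<otimes>\<^bsub>G\<^esub> h) = ?F g \<otimes>\<^bsub>BijGroup C\<^esub> ?F h"
    proof -
      have "?F g \<otimes>\<^bsub>BijGroup C\<^esub> ?F h = compose C (?F g) (?F h)"
        using inBij[OF g] inBij[OF h] by (simp add: BijGroup_def)
      also have "\<dots> = ?F (g \<otimes>\<^bsub>G\<^esub> h)"
      proof
        fix S show "compose C (?F g) (?F h) S = ?F (g \<otimes>\<^bsub>G\<^esub> h) S"
          using comp[OF g h] st[OF h] by (simp add: compose_def)
      qed
      finally show ?thesis by simp
    qed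
  qed
  show ?thesis unfolding group_action_def group_hom_def group_hom_axioms_def
    using gG group_BijGroup hom by simp
qed

lemma open_fin_all:
  assumes "finite S" "\<And>z. z \<in> S \<Longrightarrow> openin T {g \<in> topspace T. P z g}"
  shows "openin T {g \<in> topspace T. \<forall>z\<in>S. P z g}"
  using assms
proof (induction S rule: finite_induct)
  case empty thus ?case by simp
next
  case (insert a S)
  have "{g \<in> topspace T. \<forall>z\<in>insert a S. P z g} = {g \<in> topspace T. P a g} \<inter> {g \<in> topspace T. \<forall>z\<in>S. P z g}"
    by auto
  moreover have "openin T {g \<in> topspace T. P a g}" using insert.prems by simp
  moreover have "openin T {g \<in> topspace T. \<forall>z\<in>S. P z g}" using insert.IH insert.prems by simp
  ultimately show ?case by (simp only:) (rule openin_Int)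
qed

lemma open_fin_ex:
  assumes "\<And>z. z \<in> S \<Longrightarrow> openin T {g \<in> topspace T. P z g}"
  shows "openin T {g \<in> topspace T. \<exists>z\<in>S. P z g}"
proof -
  have "{g \<in> topspace T. \<exists>z\<in>S. P z g} = \<Union>((\<lambda>z. {g \<in> topspace T. P z g}) ` S)" by auto
  thus ?thesis using assms by (metis (no_types, lifting) imageE openin_Union)
qed

lemma slice_open:
  assumes c: "continuous_map (prod_topology T (discrete_topology E)) (discrete_topology E) (\<lambda>(g, x). \<phi> g x)"
    and z: "z \<in> E" and w: "w \<in> E"
  shows "openin T {g \<in> topspace T. \<phi> g z = w}"
proof -
  have ci: "continuous_map T (prod_topology T (discrete_topology E)) (\<lambda>g. (g, z))"
    by (rule continuous_map_pairedI) (auto simp: z)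
  have "continuous_map T (discrete_topology E) ((\<lambda>(g, x). \<phi> g x) \<circ> (\<lambda>g. (g, z)))"
    by (rule continuous_map_compose[OF ci c])
  hence "openin T {g \<in> topspace T. ((\<lambda>(g, x). \<phi> g x) \<circ> (\<lambda>g. (g, z))) g \<in> {w}}"
    by (rule openin_continuous_map_preimage) (simp add: w)
  thus ?thesis by simp
qed

lemma cont_to_discrete:
  assumes "\<And>x. x \<in> topspace X \<Longrightarrow> f x \<in> U"
    and "\<And>y. y \<in> U \<Longrightarrow> openin X {x \<in> topspace X. f x = y}"
  shows "continuous_map X (discrete_topology U) f"
  unfolding continuous_map_def
proof (intro conjI allI impI)
  show "f \<in> topspace X \<rightarrow> topspace (discrete_topology U)" using assms(1) by auto
  fix V assume "openin (discrete_topology U) V"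
  hence V: "V \<subseteq> U" by simp
  have eq: "{x \<in> topspace X. f x \<in> V} = \<Union>((\<lambda>y. {x \<in> topspace X. f x = y}) ` V)" by blast
  show "openin X {x \<in> topspace X. f x \<in> V}" unfolding eq
    by (rule openin_Union) (use assms(2) V in auto)
qed

lemma open_prod_discrete:
  assumes "\<And>S. S \<in> C \<Longrightarrow> openin T {g \<in> topspace T. P g S}"
  shows "openin (prod_topology T (discrete_topology C)) {x \<in> topspace (prod_topology T (discrete_topology C)). P (fst x) (snd x)}"
proof -
  have "{x \<in> topspace (prod_topology T (discrete_topology C)). P (fst x) (snd x)} =
        \<Union>((\<lambda>S. {g \<in> topspace T. P g S} \<times> {S}) ` C)" by auto
  moreover have "openin (prod_topology T (discrete_topology C)) ({g \<in> topspace T. P g S} \<times> {S})" if "S \<in> C" for S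
    using assms[OF that] that by (simp add: openin_prod_Times_iff)
  ultimately show ?thesis by (metis (no_types, lifting) imageE openin_Union)
qed

lemma gamma_set_sets:
  assumes gs: "gamma_set G T E \<phi>" and top: "topspace T = carrier G"
    and CP: "C \<subseteq> Pow E"
    and st: "\<And>g S. g \<in> carrier G \<Longrightarrow> S \<in> C \<Longrightarrow> \<phi> g ` S \<in> C"
  shows "gamma_set G T C (\<lambda>g. \<lambda>S\<in>C. \<phi> g ` S)"
proof -
  have fE: "finite E" and ga: "group_action G E \<phi>"
    and c: "continuous_map (prod_topology T (discrete_topology E)) (discrete_topology E) (\<lambda>(g, x). \<phi> g x)"
    using gs unfolding gamma_set_def by auto
  have fC: "finite C" using CP fE by (meson finite_Pow_iff finite_subset)
  have atom: "openin T {g \<in> topspace T. \<phi> g z = w}" if "z \<in> E" "w \<in> E" for z w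
    using slice_open[OF c that] .
  have img_open: "openin T {g \<in> topspace T. \<phi> g ` S = S'}" if S: "S \<in> C" and S': "S' \<in> C" for S S'
  proof -
    have SE: "S \<subseteq> E" "S' \<subseteq> E" using S S' CP by auto
    have fS: "finite S" using SE fE finite_subset by blast
    have eq: "{g \<in> topspace T. \<phi> g ` S = S'} =
      {g \<in> topspace T. \<forall>z\<in>S. \<exists>w\<in>S'. \<phi> g z = w} \<inter> {g \<in> topspace T. \<forall>w\<in>S'. \<exists>z\<in>S. \<phi> g z = w}"
      by auto
    have o1: "openin T {g \<in> topspace T. \<forall>z\<in>S. \<exists>w\<in>S'. \<phi> g z = w}"
      by (rule open_fin_all[OF fS], rule open_fin_ex) (use atom SE in auto)
    have o2: "openin T {g \<in> topspace T. \<forall>w\<in>S'. \<exists>z\<in>S. \<phi> g z = w}"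
    proof (rule open_fin_all)
      show "finite S'" using SE fE finite_subset by blast
      fix w assume "w \<in> S'"
      show "openin T {g \<in> topspace T. \<exists>z\<in>S. \<phi> g z = w}"
        by (rule open_fin_ex) (use atom SE \<open>w \<in> S'\<close> in auto)
    qed
    show ?thesis unfolding eq using o1 o2 by (rule openin_Int)
  qed
  have cont: "continuous_map (prod_topology T (discrete_topology C)) (discrete_topology C)
      (\<lambda>(g, S). (\<lambda>S\<in>C. \<phi> g ` S) S)"
  proof (rule cont_to_discrete)
    fix x assume "x \<in> topspace (prod_topology T (discrete_topology C))"
    thus "(\<lambda>(g, S). (\<lambda>S\<in>C. \<phi> g ` S) S) x \<in> C" using st top by auto
  next
    fix S' assume S': "S' \<in> C"
    have "{x \<in> topspace (prod_topology T (discrete_topology C)). (\<lambda>(g, S). (\<lambda>S\<in>C. \<phi> g ` S) S) x = S'}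
      = {x \<in> topspace (prod_topology T (discrete_topology C)). \<phi> (fst x) ` (snd x) = S'}"
      by auto
    moreover have "openin (prod_topology T (discrete_topology C))
       {x \<in> topspace (prod_topology T (discrete_topology C)). \<phi> (fst x) ` (snd x) = S'}"
      by (rule open_prod_discrete) (rule img_open[OF _ S'])
    ultimately show "openin (prod_topology T (discrete_topology C))
       {x \<in> topspace (prod_topology T (discrete_topology C)). (\<lambda>(g, S). (\<lambda>S\<in>C. \<phi> g ` S) S) x = S'}"
      by simp
  qed
  show ?thesis unfolding gamma_set_def by (intro conjI fC group_action_sets[OF ga CP st] cont)
qed


locale ctrans = A: cov Z Z0 \<pi> + B: cov Z' Z0' \<pi>'
  for Z :: "'z set" and Z0 :: "'y set" and \<pi> and Z' :: "'w set" and Z0' :: "'v set" and \<pi>' +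
  fixes h :: "'z \<Rightarrow> 'w" and h0 :: "'y \<Rightarrow> 'v"
  assumes hbij: "bij_betw h Z Z'" and hp: "\<And>z. z \<in> Z \<Longrightarrow> \<pi>' (h z) = h0 (\<pi> z)"
begin

lemma hinj: "inj_on h Z" using hbij by (simp add: bij_betw_def)
lemma hZ: "z \<in> Z \<Longrightarrow> h z \<in> Z'" using hbij by (auto simp: bij_betw_def)

lemma sw_h: assumes z: "z \<in> Z" shows "B.sw (h z) = h (A.sw z)"
proof -
  have hz: "h z \<in> Z'" using hZ[OF z] .
  have hs: "h (A.sw z) \<in> Z'" using hZ[OF A.sw_props(1)[OF z]] .
  have "\<pi>' (h (A.sw z)) = \<pi>' (h z)" using hp[OF A.sw_props(1)[OF z]] hp[OF z] A.sw_props(2)[OF z] by simp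
  hence "h (A.sw z) = h z \<or> h (A.sw z) = B.sw (h z)" using B.sw_props(4)[OF hz hs] by simp
  moreover have "h (A.sw z) \<noteq> h z"
  proof
    assume "h (A.sw z) = h z"
    hence "A.sw z = z" using inj_onD[OF hinj _ A.sw_props(1)[OF z] z] by simp
    thus False using A.sw_props(3)[OF z] by simp
  qed
  ultimately show ?thesis by simp
qed

lemma sec_h: assumes w: "\<omega> \<in> sections Z Z0 \<pi>" shows "h ` \<omega> \<in> sections Z' Z0' \<pi>'"
  unfolding B.section_iff
proof (intro conjI ballI)
  have sub: "\<omega> \<subseteq> Z" by (rule A.sec_sub[OF w])
  show "h ` \<omega> \<subseteq> Z'" using sub hZ by auto
  fix z' assume z': "z' \<in> Z'"
  then obtain z where z: "z \<in> Z" "z' = h z" using hbij by (auto simp: bij_betw_def)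
  have e1: "h z \<in> h ` \<omega> \<longleftrightarrow> z \<in> \<omega>" by (rule inj_on_image_mem_iff[OF hinj z(1) sub])
  have e2: "h (A.sw z) \<in> h ` \<omega> \<longleftrightarrow> A.sw z \<in> \<omega>" by (rule inj_on_image_mem_iff[OF hinj A.sw_props(1)[OF z(1)] sub])
  show "z' \<in> h ` \<omega> \<longleftrightarrow> B.sw z' \<notin> h ` \<omega>" using e1 e2 A.sec_in[OF w z(1)] sw_h[OF z(1)] z(2) by simp
qed

lemma delta_h: assumes w: "\<omega> \<in> sections Z Z0 \<pi>"
  shows "delta_map Z' \<pi>' (h ` \<omega>) = Delta_map h (delta_map Z \<pi> \<omega>)"
proof -
  obtain xs where xs: "xs \<in> orderings \<omega>" using orderings_exist[OF A.sec_finite[OF w]] by blast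
  have sub: "\<omega> \<subseteq> Z" by (rule A.sec_sub[OF w])
  have dx: "distinct xs" "set xs = \<omega>" using xs by (auto simp: orderings_def)
  have xs': "map h xs \<in> orderings (h ` \<omega>)" unfolding orderings_def
    using dx sub inj_on_subset[OF hinj sub] by (simp add: distinct_map)
  have mm: "map B.sw (map h xs) = map h (map A.sw xs)" unfolding map_map
    by (rule map_cong[OF refl]) (use sw_h dx sub in auto)
  have "delta_map Z' \<pi>' (h ` \<omega>) = alt_orbit (B.dl (map h xs))" by (rule B.delta_eq[OF sec_h[OF w] xs'])
  also have "B.dl (map h xs) = map h (A.dl xs)" unfolding A.dl_def B.dl_def using mm by simp
  also have "alt_orbit (map h (A.dl xs)) = Delta_map h (alt_orbit (A.dl xs))" by (rule Delta_map_alt_orbit[symmetric])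
  also have "alt_orbit (A.dl xs) = delta_map Z \<pi> \<omega>" by (rule A.delta_eq[OF w xs, symmetric])
  finally show ?thesis .
qed

end

context ocov begin

abbreviation "Q i \<equiv> compl_quot Z (C i)"

lemma C_sub: "\<omega> \<in> C i \<Longrightarrow> \<omega> \<subseteq> Z"
  using sec_sub by (simp add: C_iff)

lemma cp_compl: "\<omega> \<subseteq> Z \<Longrightarrow> compl_pair Z (Z - \<omega>) = compl_pair Z \<omega>"
  unfolding compl_pair_def by (simp add: double_diff insert_commute)

lemma cp_mem: assumes "a \<subseteq> Z" "x \<in> compl_pair Z a" shows "compl_pair Z x = compl_pair Z a"
proof -
  have "x = a \<or> x = Z - a" using assms(2) by (simp add: compl_pair_def)
  thus ?thesis using cp_compl[OF assms(1)] by auto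
qed

lemma cp_C: assumes "\<omega> \<in> C i" shows "compl_pair Z \<omega> \<subseteq> C i"
  using assms compl_C by (simp add: compl_pair_def)

lemma cp_card: assumes "\<omega> \<in> C i" shows "card (compl_pair Z \<omega>) = 2"
proof -
  have "Z - \<omega> \<noteq> \<omega>" using compl_ne assms by (simp add: C_iff)
  thus ?thesis by (simp add: compl_pair_def)
qed

lemma fiber: assumes w: "\<omega> \<in> C i"
  shows "{S \<in> C i. compl_pair Z S = compl_pair Z \<omega>} = compl_pair Z \<omega>"
proof
  show "{S \<in> C i. compl_pair Z S = compl_pair Z \<omega>} \<subseteq> compl_pair Z \<omega>"
  proof
    fix S assume "S \<in> {S \<in> C i. compl_pair Z S = compl_pair Z \<omega>}"
    hence "compl_pair Z S = compl_pair Z \<omega>" by simp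
    moreover have "S \<in> compl_pair Z S" by (simp add: compl_pair_def)
    ultimately show "S \<in> compl_pair Z \<omega>" by simp
  qed
  show "compl_pair Z \<omega> \<subseteq> {S \<in> C i. compl_pair Z S = compl_pair Z \<omega>}"
  proof
    fix S assume S: "S \<in> compl_pair Z \<omega>"
    have "S \<in> C i" using cp_C[OF w] S by auto
    moreover have "compl_pair Z S = compl_pair Z \<omega>" by (rule cp_mem[OF C_sub[OF w] S])
    ultimately show "S \<in> {S \<in> C i. compl_pair Z S = compl_pair Z \<omega>}" by simp
  qed
qed

lemma fiber_card: assumes q: "q \<in> Q i" shows "card {S \<in> C i. compl_pair Z S = q} = 2"
proof -
  obtain \<omega> where w: "\<omega> \<in> C i" "q = compl_pair Z \<omega>" using q by (auto simp: compl_quot_def)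
  show ?thesis using fiber[OF w(1)] cp_card[OF w(1)] w(2) by simp
qed

lemma UQ: "\<Union>(Q i) = C i"
proof
  show "\<Union>(Q i) \<subseteq> C i" using cp_C by (auto simp: compl_quot_def)
  show "C i \<subseteq> \<Union>(Q i)"
  proof
    fix \<omega> assume "\<omega> \<in> C i"
    moreover have "\<omega> \<in> compl_pair Z \<omega>" by (simp add: compl_pair_def)
    ultimately show "\<omega> \<in> \<Union>(Q i)" by (auto simp: compl_quot_def)
  qed
qed

lemma finC: "finite (C i)"
proof -
  have "C i \<subseteq> sections Z Z0 \<pi>" by (auto simp: C_iff)
  thus ?thesis using fin_sections finite_subset by blast
qed

lemma card_Q: assumes i: "i \<in> {1::nat, 2}" shows "card (Q i) = 2 ^ (n - 2)"
proof -
  have fQ: "finite (Q i)" using finC by (simp add: compl_quot_def)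
  have "2 * card (Q i) = card (\<Union>(Q i))"
  proof (rule card_partition)
    show "finite (Q i)" by (rule fQ)
    show "finite (\<Union>(Q i))" unfolding UQ by (rule finC)
    fix c assume "c \<in> Q i"
    then obtain \<omega> where "\<omega> \<in> C i" "c = compl_pair Z \<omega>" by (auto simp: compl_quot_def)
    thus "card c = 2" using cp_card by simp
  next
    fix c1 c2 assume c1: "c1 \<in> Q i" and c2: "c2 \<in> Q i" and ne: "c1 \<noteq> c2"
    obtain a where a: "a \<in> C i" "c1 = compl_pair Z a" using c1 by (auto simp: compl_quot_def)
    obtain b where b: "b \<in> C i" "c2 = compl_pair Z b" using c2 by (auto simp: compl_quot_def)
    show "c1 \<inter> c2 = {}"
    proof (rule ccontr)
      assume "c1 \<inter> c2 \<noteq> {}"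
      then obtain x where x: "x \<in> c1" "x \<in> c2" by blast
      have "compl_pair Z x = c1" using cp_mem[OF C_sub[OF a(1)]] x(1) a(2) by simp
      moreover have "compl_pair Z x = c2" using cp_mem[OF C_sub[OF b(1)]] x(2) b(2) by simp
      ultimately show False using ne by simp
    qed
  qed
  hence "2 * card (Q i) = 2 ^ (n - 1)" using UQ card_C[OF i] by simp
  moreover have "(2::nat) ^ (n - 1) = 2 * 2 ^ (n - 2)" using n2
    by (metis Suc_diff_Suc Suc_1 diff_Suc_1 less_le_trans lessI power_Suc)
  ultimately show ?thesis by simp
qed

end


lemma cp_image:
  assumes fb: "bij_betw f Z Z'" and sub: "\<omega> \<subseteq> Z"
  shows "image f ` compl_pair Z \<omega> = compl_pair Z' (f ` \<omega>)"
proof -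
  have "f ` (Z - \<omega>) = f ` Z - f ` \<omega>"
    by (rule inj_on_image_set_diff[OF bij_betw_imp_inj_on[OF fb]]) (use sub in auto)
  also have "\<dots> = Z' - f ` \<omega>" using fb by (simp add: bij_betw_def)
  finally show ?thesis by (simp add: compl_pair_def)
qed

lemma act_stable:
  assumes oc: "ocov Z Z0 \<pi> ori n" and ga: "group_action G Z act"
    and eqv: "\<And>g z. g \<in> carrier G \<Longrightarrow> z \<in> Z \<Longrightarrow> \<pi> (act g z) = act0 g (\<pi> z)"
    and inv: "\<forall>g\<in>carrier G. \<forall>i\<in>{1::nat, 2}. Delta_act Z act g (ori i) = ori i"
    and g: "g \<in> carrier G" and i: "i \<in> {1::nat,2}" and w: "\<omega> \<in> C_part Z Z0 \<pi> ori i"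
  shows "act g ` \<omega> \<in> C_part Z Z0 \<pi> ori i"
proof -
  interpret ocov Z Z0 \<pi> ori n by (rule oc)
  have cv: "cov Z Z0 \<pi>" using oc by (rule ocov.axioms(1))
  have bj: "bij_betw (act g) Z Z" using group_action.bij_prop0[OF ga g] by (simp add: Bij_def)
  have tr: "ctrans Z Z0 \<pi> Z Z0 \<pi> (act g) (act0 g)"
    by (intro ctrans.intro cv ctrans_axioms.intro bj) (simp add: eqv g)
  interpret T: ctrans Z Z0 \<pi> Z Z0 \<pi> "act g" "act0 g" by (rule tr)
  have ws: "\<omega> \<in> sections Z Z0 \<pi>" and d: "delta_map Z \<pi> \<omega> = ori i" using w by (auto simp: C_iff)
  have "ori i \<in> Delta Z" using DZ i by auto
  moreover have "Delta_act Z act g (ori i) = ori i" using inv g i by blast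
  ultimately have "Delta_map (act g) (ori i) = ori i" by (simp add: Delta_act_def)
  hence "delta_map Z \<pi> (act g ` \<omega>) = ori i" using T.delta_h[OF ws] d by simp
  thus ?thesis using T.sec_h[OF ws] by (simp add: C_iff)
qed

lemma functorial:
  assumes oA: "ocov Z Z0 \<pi> ori n" and oB: "ocov Z' Z0' \<pi>' ori' n'"
    and fb: "bij_betw f Z Z'" and f0b: "bij_betw f0 Z0 Z0'"
    and fp: "\<And>z. z \<in> Z \<Longrightarrow> \<pi>' (f z) = f0 (\<pi> z)"
    and feq: "\<forall>g\<in>carrier G. \<forall>z\<in>Z. f (act g z) = act' g (f z)"
    and Dm: "\<forall>i\<in>{1::nat,2}. Delta_map f (ori i) = ori' i"
    and i: "i \<in> {1::nat, 2}"
  shows "covering_iso G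
                  (C_part Z Z0 \<pi> ori i) (compl_quot Z (C_part Z Z0 \<pi> ori i))
                  (image_act (C_part Z Z0 \<pi> ori i) act)
                  (quot_act (compl_quot Z (C_part Z Z0 \<pi> ori i)) act)
                  (compl_pair Z)
                  (C_part Z' Z0' \<pi>' ori' i) (compl_quot Z' (C_part Z' Z0' \<pi>' ori' i))
                  (image_act (C_part Z' Z0' \<pi>' ori' i) act')
                  (quot_act (compl_quot Z' (C_part Z' Z0' \<pi>' ori' i)) act')
                  (compl_pair Z')
                  (\<lambda>\<omega>. f ` \<omega>) (\<lambda>q. (\<lambda>\<omega>. f ` \<omega>) ` q)"
proof -
  interpret A: ocov Z Z0 \<pi> ori n by (rule oA)
  interpret B: ocov Z' Z0' \<pi>' ori' n' by (rule oB)
  have cA: "cov Z Z0 \<pi>" using oA by (rule ocov.axioms(1))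
  have cB: "cov Z' Z0' \<pi>'" using oB by (rule ocov.axioms(1))
  interpret F: ctrans Z Z0 \<pi> Z' Z0' \<pi>' f f0
    by (intro ctrans.intro cA cB ctrans_axioms.intro fb fp)
  have fi: "bij_betw (inv_into Z f) Z' Z" by (rule bij_betw_inv_into[OF fb])
  have inj0: "inj_on f0 Z0" using f0b by (simp add: bij_betw_def)
  have ip: "\<pi> (inv_into Z f z') = inv_into Z0 f0 (\<pi>' z')" if z': "z' \<in> Z'" for z'
  proof -
    have zz: "inv_into Z f z' \<in> Z" "f (inv_into Z f z') = z'"
      using fb z' by (auto simp: bij_betw_def inv_into_into f_inv_into_f)
    have "\<pi>' z' = f0 (\<pi> (inv_into Z f z'))" using fp[OF zz(1)] zz(2) by simp
    thus ?thesis using inv_into_f_f[OF inj0 A.piZ[OF zz(1)]] by simp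
  qed
  interpret Fi: ctrans Z' Z0' \<pi>' Z Z0 \<pi> "inv_into Z f" "inv_into Z0 f0"
    by (intro ctrans.intro cA cB ctrans_axioms.intro fi ip)
  let ?CA = "C_part Z Z0 \<pi> ori i" and ?CB = "C_part Z' Z0' \<pi>' ori' i"
  let ?QA = "compl_quot Z ?CA" and ?QB = "compl_quot Z' ?CB"
  let ?F = "\<lambda>\<omega>. f ` \<omega>" and ?FQ = "\<lambda>q. (\<lambda>\<omega>. f ` \<omega>) ` q"
  have mapC: "f ` \<omega> \<in> ?CB" if w: "\<omega> \<in> ?CA" for \<omega>
  proof -
    have ws: "\<omega> \<in> sections Z Z0 \<pi>" and d: "delta_map Z \<pi> \<omega> = ori i" using w by (auto simp: A.C_iff)
    have "Delta_map f (ori i) = ori' i" using Dm i by blast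
    hence "delta_map Z' \<pi>' (f ` \<omega>) = ori' i" using F.delta_h[OF ws] d by simp
    thus ?thesis using F.sec_h[OF ws] by (simp add: B.C_iff)
  qed
  have injC: "inj_on ?F ?CA"
    by (rule inj_on_subset[OF inj_on_image_Pow[OF F.hinj]]) (use A.C_sub in auto)
  have imgC: "?F ` ?CA = ?CB"
  proof
    show "?F ` ?CA \<subseteq> ?CB" using mapC by auto
    show "?CB \<subseteq> ?F ` ?CA"
    proof
      fix \<omega>' assume w': "\<omega>' \<in> ?CB"
      have ws': "\<omega>' \<in> sections Z' Z0' \<pi>'" and d': "delta_map Z' \<pi>' \<omega>' = ori' i" using w' by (auto simp: B.C_iff)
      define \<omega> where "\<omega> = inv_into Z f ` \<omega>'"
      have ws: "\<omega> \<in> sections Z Z0 \<pi>" unfolding \<omega>_def by (rule Fi.sec_h[OF ws'])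
      have fw: "f ` \<omega> = \<omega>'" unfolding \<omega>_def
        by (rule image_inv_into_cancel) (use fb B.C_sub[OF w'] in \<open>auto simp: bij_betw_def\<close>)
      have dd: "Delta_map f (delta_map Z \<pi> \<omega>) = ori' i" using F.delta_h[OF ws] fw d' by simp
      have "delta_map Z \<pi> \<omega> = ori i"
      proof (rule ccontr)
        assume ne: "delta_map Z \<pi> \<omega> \<noteq> ori i"
        obtain j where j: "j \<in> {1::nat, 2}" "j \<noteq> i" "delta_map Z \<pi> \<omega> = ori j"
          using A.delta_12[OF ws] ne i by auto
        hence "ori' j = ori' i" using dd Dm by auto
        moreover have "ori' j \<noteq> ori' i" using B.o12 i j by auto
        ultimately show False by simp
      qed
      hence "\<omega> \<in> ?CA" using ws by (simp add: A.C_iff)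
      thus "\<omega>' \<in> ?F ` ?CA" using fw by blast
    qed
  qed
  have bC: "bij_betw ?F ?CA ?CB" unfolding bij_betw_def using injC imgC by simp
  have cpF: "?FQ (compl_pair Z \<omega>) = compl_pair Z' (f ` \<omega>)" if "\<omega> \<in> ?CA" for \<omega>
    by (rule cp_image[OF fb A.C_sub[OF that]])
  have injQ: "inj_on ?FQ ?QA"
  proof (rule inj_on_subset[OF inj_on_image_Pow[OF injC]])
    show "?QA \<subseteq> Pow ?CA" using A.cp_C by (auto simp: compl_quot_def)
  qed
  have imgQ: "?FQ ` ?QA = ?QB"
  proof -
    have "?FQ ` ?QA = (\<lambda>\<omega>. compl_pair Z' (f ` \<omega>)) ` ?CA"
      unfolding compl_quot_def image_image by (rule image_cong[OF refl]) (rule cpF)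
    also have "\<dots> = compl_pair Z' ` (?F ` ?CA)" by (simp add: image_image)
    also have "\<dots> = ?QB" using imgC by (simp add: compl_quot_def)
    finally show ?thesis .
  qed
  have bQ: "bij_betw ?FQ ?QA ?QB" unfolding bij_betw_def using injQ imgQ by simp
  have e1: "\<forall>g\<in>carrier G. \<forall>\<omega>\<in>?CA. ?F (image_act ?CA act g \<omega>) = image_act ?CB act' g (?F \<omega>)"
  proof (intro ballI)
    fix g \<omega> assume g: "g \<in> carrier G" and w: "\<omega> \<in> ?CA"
    have sub: "\<omega> \<subseteq> Z" using A.C_sub[OF w] .
    have "f ` act g ` \<omega> = act' g ` f ` \<omega>" unfolding image_image
      by (rule image_cong[OF refl]) (use feq g sub in auto)
    thus "?F (image_act ?CA act g \<omega>) = image_act ?CB act' g (?F \<omega>)"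
      using w mapC[OF w] by (simp add: image_act_def)
  qed
  have e2: "\<forall>g\<in>carrier G. \<forall>q\<in>?QA. ?FQ (quot_act ?QA act g q) = quot_act ?QB act' g (?FQ q)"
  proof (intro ballI)
    fix g q assume g: "g \<in> carrier G" and q: "q \<in> ?QA"
    obtain x where x: "x \<in> ?CA" "q = compl_pair Z x" using q by (auto simp: compl_quot_def)
    have qsub: "\<omega> \<subseteq> Z" if "\<omega> \<in> q" for \<omega>
    proof -
      have "\<omega> \<in> ?CA" using A.cp_C[OF x(1)] x(2) that by blast
      thus ?thesis by (rule A.C_sub)
    qed
    have FQq: "?FQ q \<in> ?QB" using imgQ q by blast
    have "?FQ ((\<lambda>\<omega>. act g ` \<omega>) ` q) = (\<lambda>\<omega>. act' g ` \<omega>) ` ?FQ q"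
    proof -
      have "?FQ ((\<lambda>\<omega>. act g ` \<omega>) ` q) = (\<lambda>\<omega>. f ` act g ` \<omega>) ` q" by (simp add: image_image)
      also have "\<dots> = (\<lambda>\<omega>. act' g ` f ` \<omega>) ` q"
      proof (rule image_cong[OF refl])
        fix \<omega> assume "\<omega> \<in> q"
        hence sub: "\<omega> \<subseteq> Z" by (rule qsub)
        show "f ` act g ` \<omega> = act' g ` f ` \<omega>" unfolding image_image
          by (rule image_cong[OF refl]) (use feq g sub in auto)
      qed
      also have "\<dots> = (\<lambda>\<omega>. act' g ` \<omega>) ` ?FQ q" by (simp add: image_image)
      finally show ?thesis .
    qed
    thus "?FQ (quot_act ?QA act g q) = quot_act ?QB act' g (?FQ q)"
      using q FQq by (simp add: quot_act_def)
  qed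
  have e3: "\<forall>\<omega>\<in>?CA. compl_pair Z' (?F \<omega>) = ?FQ (compl_pair Z \<omega>)"
    using cpF by simp
  show ?thesis unfolding covering_iso_def using bC bQ e1 e2 e3 by blast
qed


lemma mk_ocov:
  assumes c: "covering2 G T Z Z0 act act0 \<pi>" and o: "orientation G Z act ori"
    and n: "card Z0 = n" "even n" "n \<ge> 2"
  shows "ocov Z Z0 \<pi> ori n"
proof -
  have gsZ: "gamma_set G T Z act" and piZ: "\<forall>z\<in>Z. \<pi> z \<in> Z0"
    and fib: "\<forall>y\<in>Z0. card {z \<in> Z. \<pi> z = y} = 2" using c unfolding covering2_def by auto
  have fZ: "finite Z" using gsZ unfolding gamma_set_def by auto
  have cv: "cov Z Z0 \<pi>" by (rule cov.intro) (use fZ piZ fib in auto)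
  have ob: "bij_betw ori {1,2} (Delta Z)" using o unfolding orientation_def by auto
  have DZ: "Delta Z = {ori 1, ori 2}" using ob by (auto simp: bij_betw_def)
  have o12: "ori 1 \<noteq> ori 2"
  proof
    assume "ori 1 = ori 2"
    hence "(1::nat) = 2" using ob unfolding bij_betw_def inj_on_def by blast
    thus False by simp
  qed
  show ?thesis by (intro ocov.intro cv ocov_axioms.intro) (use n DZ o12 in auto)
qed

theorem proposition2p2:
  fixes G :: "('g, 'm) monoid_scheme" and T :: "'g topology"
    and Z :: "'z set" and Z0 :: "'y set"
    and act :: "'g \<Rightarrow> 'z \<Rightarrow> 'z" and act0 :: "'g \<Rightarrow> 'y \<Rightarrow> 'y"
    and \<pi> :: "'z \<Rightarrow> 'y" and ori :: "nat \<Rightarrow> 'z list set" and n :: nat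
  assumes "profinite_group G T"
    and "n \<ge> 2" and "even n"
    and "covering2 G T Z Z0 act act0 \<pi>"
    and "orientation G Z act ori"
    and "card Z0 = n"
  shows
    "sections Z Z0 \<pi> = C_part Z Z0 \<pi> ori 1 \<union> C_part Z Z0 \<pi> ori 2
     \<and> C_part Z Z0 \<pi> ori 1 \<inter> C_part Z Z0 \<pi> ori 2 = {}
     \<and> (\<forall>i \<in> {1::nat, 2}.
          (\<forall>g \<in> carrier G. \<forall>\<omega> \<in> C_part Z Z0 \<pi> ori i. act g ` \<omega> \<in> C_part Z Z0 \<pi> ori i)
        \<and> (\<forall>\<omega> \<in> C_part Z Z0 \<pi> ori i.
             Z - \<omega> \<in> C_part Z Z0 \<pi> ori i \<and> Z - \<omega> \<noteq> \<omega> \<and> Z - (Z - \<omega>) = \<omega>)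
        \<and> covering2 G T (C_part Z Z0 \<pi> ori i) (compl_quot Z (C_part Z Z0 \<pi> ori i))
            (image_act (C_part Z Z0 \<pi> ori i) act)
            (quot_act (compl_quot Z (C_part Z Z0 \<pi> ori i)) act)
            (compl_pair Z)
        \<and> card (compl_quot Z (C_part Z Z0 \<pi> ori i)) = 2 ^ (n - 2))
     \<and> (\<forall>(Z' :: 'w set) (Z0' :: 'v set) act' act0' \<pi>' ori' f f0.
          covering2 G T Z' Z0' act' act0' \<pi>' \<and> orientation G Z' act' ori' \<and>
          covering_iso G Z Z0 act act0 \<pi> Z' Z0' act' act0' \<pi>' f f0 \<and>
          (\<forall>i \<in> {1::nat, 2}. Delta_map f (ori i) = ori' i)
          \<longrightarrow> (\<forall>i \<in> {1::nat, 2}.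
                covering_iso G
                  (C_part Z Z0 \<pi> ori i) (compl_quot Z (C_part Z Z0 \<pi> ori i))
                  (image_act (C_part Z Z0 \<pi> ori i) act)
                  (quot_act (compl_quot Z (C_part Z Z0 \<pi> ori i)) act)
                  (compl_pair Z)
                  (C_part Z' Z0' \<pi>' ori' i) (compl_quot Z' (C_part Z' Z0' \<pi>' ori' i))
                  (image_act (C_part Z' Z0' \<pi>' ori' i) act')
                  (quot_act (compl_quot Z' (C_part Z' Z0' \<pi>' ori' i)) act')
                  (compl_pair Z')
                  (\<lambda>\<omega>. f ` \<omega>) (\<lambda>q. (\<lambda>\<omega>. f ` \<omega>) ` q)))
     \<and> (\<forall>\<omega> \<in> sections Z Z0 \<pi>. \<forall>\<omega>' \<in> sections Z Z0 \<pi>.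
          ((\<omega> \<in> C_part Z Z0 \<pi> ori 1 \<and> \<omega>' \<in> C_part Z Z0 \<pi> ori 1) \<or>
           (\<omega> \<in> C_part Z Z0 \<pi> ori 2 \<and> \<omega>' \<in> C_part Z Z0 \<pi> ori 2))
          \<longleftrightarrow> even (card (\<omega> \<inter> \<omega>')))"
proof -
  from assms(4) have gsZ: "gamma_set G T Z act"
    and eqv: "\<forall>g\<in>carrier G. \<forall>z\<in>Z. \<pi> (act g z) = act0 g (\<pi> z)"
    unfolding covering2_def by auto
  have ga: "group_action G Z act" using gsZ unfolding gamma_set_def by auto
  have top: "topspace T = carrier G" using assms(1) unfolding profinite_group_def by simp
  have oinv: "\<forall>g\<in>carrier G. \<forall>i\<in>{1::nat, 2}. Delta_act Z act g (ori i) = ori i"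
    using assms(5) unfolding orientation_def by auto
  have oc: "ocov Z Z0 \<pi> ori n" by (rule mk_ocov[OF assms(4) assms(5) assms(6) assms(3) assms(2)])
  interpret ocov Z Z0 \<pi> ori n by (rule oc)
  have eqv': "\<And>g z. g \<in> carrier G \<Longrightarrow> z \<in> Z \<Longrightarrow> \<pi> (act g z) = act0 g (\<pi> z)" using eqv by auto
  have bjg: "bij_betw (act g) Z Z" if "g \<in> carrier G" for g
    using group_action.bij_prop0[OF ga that] by (simp add: Bij_def)
  have stabC: "act g ` \<omega> \<in> C i" if "g \<in> carrier G" "i \<in> {1::nat, 2}" "\<omega> \<in> C i" for g i \<omega>
    by (rule act_stable[OF oc ga eqv' oinv that])
  have partc: "(\<forall>g \<in> carrier G. \<forall>\<omega> \<in> C i. act g ` \<omega> \<in> C i)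
        \<and> (\<forall>\<omega> \<in> C i. Z - \<omega> \<in> C i \<and> Z - \<omega> \<noteq> \<omega> \<and> Z - (Z - \<omega>) = \<omega>)
        \<and> covering2 G T (C i) (compl_quot Z (C i))
            (image_act (C i) act)
            (quot_act (compl_quot Z (C i)) act)
            (compl_pair Z)
        \<and> card (compl_quot Z (C i)) = 2 ^ (n - 2)" if i: "i \<in> {1::nat, 2}" for i
  proof (intro conjI)
    show "\<forall>g \<in> carrier G. \<forall>\<omega> \<in> C i. act g ` \<omega> \<in> C i" using stabC i by blast
    show "\<forall>\<omega> \<in> C i. Z - \<omega> \<in> C i \<and> Z - \<omega> \<noteq> \<omega> \<and> Z - (Z - \<omega>) = \<omega>"
    proof
      fix \<omega> assume w: "\<omega> \<in> C i"
      have ws: "\<omega> \<in> sections Z Z0 \<pi>" using w by (simp add: C_iff)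
      show "Z - \<omega> \<in> C i \<and> Z - \<omega> \<noteq> \<omega> \<and> Z - (Z - \<omega>) = \<omega>"
        using compl_C[OF w] compl_ne[OF ws] C_sub[OF w] by (simp add: double_diff)
    qed
    show "card (compl_quot Z (C i)) = 2 ^ (n - 2)" by (rule card_Q[OF i])
    have IA: "image_act (C i) act = (\<lambda>g. \<lambda>S\<in>C i. act g ` S)" by (rule ext) (simp add: image_act_def)
    have CP: "C i \<subseteq> Pow Z" using C_sub by auto
    have gsC: "gamma_set G T (C i) (image_act (C i) act)"
      unfolding IA by (rule gamma_set_sets[OF gsZ top CP]) (rule stabC[OF _ i])
    have QA: "quot_act (Q i) act = (\<lambda>g. \<lambda>q\<in>Q i. image_act (C i) act g ` q)"
    proof (rule ext)+
      fix g q
      show "quot_act (Q i) act g q = (\<lambda>q\<in>Q i. image_act (C i) act g ` q) q"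
      proof (cases "q \<in> Q i")
        case True
        have "(\<lambda>\<omega>. act g ` \<omega>) ` q = image_act (C i) act g ` q"
        proof (rule image_cong[OF refl])
          fix \<omega> assume "\<omega> \<in> q"
          hence "\<omega> \<in> C i" using True UQ by blast
          thus "act g ` \<omega> = image_act (C i) act g \<omega>" by (simp add: image_act_def)
        qed
        thus ?thesis using True by (simp add: quot_act_def)
      next
        case False thus ?thesis by (simp add: quot_act_def)
      qed
    qed
    have QP: "Q i \<subseteq> Pow (C i)" using UQ by blast
    have stQ: "image_act (C i) act g ` q \<in> Q i" if g: "g \<in> carrier G" and q: "q \<in> Q i" for g q
    proof -
      obtain \<omega> where w: "\<omega> \<in> C i" "q = compl_pair Z \<omega>" using q by (auto simp: compl_quot_def)
      have "image_act (C i) act g ` q = image (act g) ` q"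
      proof (rule image_cong[OF refl])
        fix S assume "S \<in> q" hence "S \<in> C i" using cp_C[OF w(1)] w(2) by blast
        thus "image_act (C i) act g S = act g ` S" by (simp add: image_act_def)
      qed
      also have "\<dots> = compl_pair Z (act g ` \<omega>)" unfolding w(2) by (rule cp_image[OF bjg[OF g] C_sub[OF w(1)]])
      finally show ?thesis using stabC[OF g i w(1)] by (simp add: compl_quot_def)
    qed
    have gsQ: "gamma_set G T (Q i) (quot_act (Q i) act)"
      unfolding QA by (rule gamma_set_sets[OF gsC top QP stQ])
    show "covering2 G T (C i) (compl_quot Z (C i)) (image_act (C i) act)
            (quot_act (compl_quot Z (C i)) act) (compl_pair Z)"
      unfolding covering2_def
    proof (intro conjI gsC gsQ ballI)
      fix S assume "S \<in> C i" thus "compl_pair Z S \<in> Q i" by (simp add: compl_quot_def)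
    next
      fix g S assume g: "g \<in> carrier G" and S: "S \<in> C i"
      have cS: "compl_pair Z S \<in> Q i" using S by (simp add: compl_quot_def)
      show "compl_pair Z (image_act (C i) act g S) = quot_act (Q i) act g (compl_pair Z S)"
        using S cS cp_image[OF bjg[OF g] C_sub[OF S]] by (simp add: image_act_def quot_act_def)
    next
      fix q assume "q \<in> Q i" thus "card {S \<in> C i. compl_pair Z S = q} = 2" by (rule fiber_card)
    qed
  qed
  have partd: "\<forall>(Z' :: 'w set) (Z0' :: 'v set) act' act0' \<pi>' ori' f f0.
          covering2 G T Z' Z0' act' act0' \<pi>' \<and> orientation G Z' act' ori' \<and>
          covering_iso G Z Z0 act act0 \<pi> Z' Z0' act' act0' \<pi>' f f0 \<and>
          (\<forall>i \<in> {1::nat, 2}. Delta_map f (ori i) = ori' i)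
          \<longrightarrow> (\<forall>i \<in> {1::nat, 2}.
                covering_iso G
                  (C_part Z Z0 \<pi> ori i) (compl_quot Z (C_part Z Z0 \<pi> ori i))
                  (image_act (C_part Z Z0 \<pi> ori i) act)
                  (quot_act (compl_quot Z (C_part Z Z0 \<pi> ori i)) act)
                  (compl_pair Z)
                  (C_part Z' Z0' \<pi>' ori' i) (compl_quot Z' (C_part Z' Z0' \<pi>' ori' i))
                  (image_act (C_part Z' Z0' \<pi>' ori' i) act')
                  (quot_act (compl_quot Z' (C_part Z' Z0' \<pi>' ori' i)) act')
                  (compl_pair Z')
                  (\<lambda>\<omega>. f ` \<omega>) (\<lambda>q. (\<lambda>\<omega>. f ` \<omega>) ` q))"
  proof (intro allI impI ballI)
    fix Z' :: "'w set" and Z0' :: "'v set" and act' act0' \<pi>' ori' f f0 i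
    assume H: "covering2 G T Z' Z0' act' act0' \<pi>' \<and> orientation G Z' act' ori' \<and>
          covering_iso G Z Z0 act act0 \<pi> Z' Z0' act' act0' \<pi>' f f0 \<and>
          (\<forall>i \<in> {1::nat, 2}. Delta_map f (ori i) = ori' i)"
      and i: "i \<in> {1::nat, 2}"
    have ci: "covering_iso G Z Z0 act act0 \<pi> Z' Z0' act' act0' \<pi>' f f0" using H by blast
    have fb: "bij_betw f Z Z'" and f0b: "bij_betw f0 Z0 Z0'"
      and feq: "\<forall>g\<in>carrier G. \<forall>z\<in>Z. f (act g z) = act' g (f z)"
      and fp: "\<forall>z\<in>Z. \<pi>' (f z) = f0 (\<pi> z)"
      using ci unfolding covering_iso_def by auto
    have cn: "card Z0' = n" using bij_betw_same_card[OF f0b] assms(6) by simp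
    have oc': "ocov Z' Z0' \<pi>' ori' n"
      using H by (intro mk_ocov[OF _ _ cn assms(3) assms(2)]) blast+
    have Dm: "\<forall>i\<in>{1::nat,2}. Delta_map f (ori i) = ori' i" using H by blast
    show "covering_iso G
                  (C_part Z Z0 \<pi> ori i) (compl_quot Z (C_part Z Z0 \<pi> ori i))
                  (image_act (C_part Z Z0 \<pi> ori i) act)
                  (quot_act (compl_quot Z (C_part Z Z0 \<pi> ori i)) act)
                  (compl_pair Z)
                  (C_part Z' Z0' \<pi>' ori' i) (compl_quot Z' (C_part Z' Z0' \<pi>' ori' i))
                  (image_act (C_part Z' Z0' \<pi>' ori' i) act')
                  (quot_act (compl_quot Z' (C_part Z' Z0' \<pi>' ori' i)) act')
                  (compl_pair Z')
                  (\<lambda>\<omega>. f ` \<omega>) (\<lambda>q. (\<lambda>\<omega>. f ` \<omega>) ` q)"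
      by (rule functorial[OF oc oc' fb f0b _ feq Dm i]) (use fp in blast)
  qed
  have parte: "\<forall>\<omega> \<in> sections Z Z0 \<pi>. \<forall>\<omega>' \<in> sections Z Z0 \<pi>.
          ((\<omega> \<in> C_part Z Z0 \<pi> ori 1 \<and> \<omega>' \<in> C_part Z Z0 \<pi> ori 1) \<or>
           (\<omega> \<in> C_part Z Z0 \<pi> ori 2 \<and> \<omega>' \<in> C_part Z Z0 \<pi> ori 2))
          \<longleftrightarrow> even (card (\<omega> \<inter> \<omega>'))"
  proof (intro ballI)
    fix \<omega> \<omega>' assume w: "\<omega> \<in> sections Z Z0 \<pi>" and w': "\<omega>' \<in> sections Z Z0 \<pi>"
    show "((\<omega> \<in> C_part Z Z0 \<pi> ori 1 \<and> \<omega>' \<in> C_part Z Z0 \<pi> ori 1) \<or>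
           (\<omega> \<in> C_part Z Z0 \<pi> ori 2 \<and> \<omega>' \<in> C_part Z Z0 \<pi> ori 2))
          \<longleftrightarrow> even (card (\<omega> \<inter> \<omega>'))"
      using same_class[OF w w'] parity[OF w w'] parity_int[OF w, of \<omega>'] by simp
  qed
  show ?thesis
    apply (intro conjI)
        apply (rule cover)
       apply (rule disj)
      apply (rule ballI, erule partc)
     apply (rule partd)
    apply (rule parte)
    done
qed


end
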